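(* Consider the spectral triple $(C^\infty(S^2_q),\ell^2(\mathbb{Z}_+)\oplus\ell^2(\mathbb{Z}_+),D')$ and let $B$ be the algebra generated by $C^\infty(S^2_q)$ and the commutators $[D',x]$, $x\in C^\infty(S^2_q)$ (so $B\subset A^\infty\otimes\mathrm{Mat}_2(\mathbb{C})$). For $T\in B$ let $\zeta_T(s)=\mathrm{Trace}_{\ell^2(\mathbb{Z}_+)\oplus\ell^2(\mathbb{Z}_+)}(T|D'|^{-s})$. Then the dimension spectrum of the triple is $\{1\}$, and for all $T\in B$, $$\mathrm{Res}_{s=1}\zeta_T(s)=\frac{1}{2\pi}\int_{S^1}\mathrm{Trace}_{\mathbb{C}^2}\tilde\rho(T)\,\mathrm{d}\theta,$$ where $\tilde\rho=\sigma\otimes\mathrm{id}:A^\infty\otimes\mathrm{Mat}_2(\mathbb{C})\to C^\infty(S^1)\otimes\mathrm{Mat}_2(\mathbb{C})$.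
   Context: $\mathbb{N}=\{0,1,2,\dots\}$, $\mathbb{Z}_+=\{1,2,\dots\}$. On $\ell^2(\mathbb{Z}_+)$ with orthonormal basis $\{|n\rangle\}$, $N|n\rangle=n|n\rangle$, $w|n\rangle=|n+1\rangle$. $A^\infty$ is the $*$-algebra of operators $f=\sum_{n\in\mathbb{N}}(f_nw^n+f_{-n-1}(w^* )^{n+1})+\sum_{j,k\in\mathbb{N}}f_{jk}w^j(1-ww^* )(w^* )^k$ with $\{f_n\}_{n\in\mathbb{Z}}$ a rapid decay sequence and $\{f_{jk}\}$ a rapid decay matrix, and $\sigma(f)(\theta)=\sum_nf_ne^{in\theta}$. $C^\infty(S^2_q)=\{(x,y)\in A^\infty\oplus A^\infty:\sigma(x)=\sigma(y)\}$ acting diagonally on $\ell^2(\mathbb{Z}_+)\oplus\ell^2(\mathbb{Z}_+)\cong\ell^2(\mathbb{Z}_+)\otimes\mathbb{C}^2$, and $D'=N\otimes\begin{pmatrix}0&1\\1&0\end{pmatrix}$, so $|D'|=N\otimes\mathrm{id}$. With $\delta=[|D'|,\cdot]$, the triple has dimension spectrum $\Sigma$ if $\Sigma$ is countable and for every $T\in\bigcup_j\delta^j(C^\infty(S^2_q)\cup[D',C^\infty(S^2_q)])$, $\zeta_T$ extends meromorphically to $\mathbb{C}$ with poles only in $\Sigma$ ($\Sigma$ minimal). *)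

theory Defs
  imports "HOL-Complex_Analysis.Complex_Analysis"
begin

text \<open>Operators on l2(Z_+) are represented by their matrices w.r.t. the basis |n>, n >= 1;
  the natural number k indexes the basis vector |k+1>.  So op k l = <k+1| op |l+1>.\<close>

type_synonym op1 = "nat \<Rightarrow> nat \<Rightarrow> complex"

text \<open>Operators on l2(Z_+) (x) C^2: index (k, a) with a = False / True the first / second summand.\<close>

type_synonym op2 = "nat \<times> bool \<Rightarrow> nat \<times> bool \<Rightarrow> complex"

definition rapid_decay_seq :: "(int \<Rightarrow> complex) \<Rightarrow> bool" where
  "rapid_decay_seq g \<longleftrightarrow> (\<forall>p::nat. \<exists>C. \<forall>n. (1 + real_of_int \<bar>n\<bar>) ^ p * norm (g n) \<le> C)"

definition rapid_decay_mat :: "(nat \<Rightarrow> nat \<Rightarrow> complex) \<Rightarrow> bool" where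
  "rapid_decay_mat h \<longleftrightarrow> (\<forall>p::nat. \<exists>C. \<forall>j k. (1 + real j + real k) ^ p * norm (h j k) \<le> C)"

text \<open>Matrix of sum_n (f_n w^n + f_(-n-1) w*^(n+1)) + sum_jk f_jk w^j (1 - w w*) w*^k :
  <a+1| w^n |b+1> = [a = b + n],  <a+1| w*^(n+1) |b+1> = [b = a + n + 1],
  <a+1| w^j (1 - w w*) w*^k |b+1> = [a = j][b = k].\<close>

definition toep_op :: "(int \<Rightarrow> complex) \<Rightarrow> (nat \<Rightarrow> nat \<Rightarrow> complex) \<Rightarrow> op1" where
  "toep_op g h = (\<lambda>a b. g (int a - int b) + h a b)"

definition Ainf :: "op1 set" where
  "Ainf = {toep_op g h | g h. rapid_decay_seq g \<and> rapid_decay_mat h}"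

text \<open>The Toeplitz coefficients {f_n} of an element of A^infinity (uniquely determined).\<close>

definition symb_coeffs :: "op1 \<Rightarrow> int \<Rightarrow> complex" where
  "symb_coeffs f = (THE g. \<exists>h. rapid_decay_seq g \<and> rapid_decay_mat h \<and> f = toep_op g h)"

definition sigma :: "op1 \<Rightarrow> real \<Rightarrow> complex" where
  "sigma f \<theta> = (\<Sum>\<^sub>\<infinity>n\<in>(UNIV::int set). symb_coeffs f n * cis (of_int n * \<theta>))"

definition diag_op :: "op1 \<Rightarrow> op1 \<Rightarrow> op2" where
  "diag_op x y = (\<lambda>(m, a) (n, b). if a = b then (if a then y m n else x m n) else 0)"

definition CS2q :: "op2 set" where
  "CS2q = {diag_op x y | x y. x \<in> Ainf \<and> y \<in> Ainf \<and> sigma x = sigma y}"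

text \<open>D' = N (x) [[0,1],[1,0]] and |D'| = N (x) id.\<close>

definition Dp :: op2 where
  "Dp = (\<lambda>(m, a) (n, b). if m = n \<and> a \<noteq> b then of_nat (Suc m) else 0)"

definition absDp :: op2 where
  "absDp = (\<lambda>(m, a) (n, b). if m = n \<and> a = b then of_nat (Suc m) else 0)"

definition opmul :: "op2 \<Rightarrow> op2 \<Rightarrow> op2" where
  "opmul A B = (\<lambda>i j. \<Sum>\<^sub>\<infinity>k\<in>UNIV. A i k * B k j)"

definition opcomm :: "op2 \<Rightarrow> op2 \<Rightarrow> op2" where
  "opcomm A B = (\<lambda>i j. opmul A B i j - opmul B A i j)"

definition delta :: "op2 \<Rightarrow> op2" where
  "delta T = opcomm absDp T"

inductive_set alg_gen :: "op2 set \<Rightarrow> op2 set" for G where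
  gen: "T \<in> G \<Longrightarrow> T \<in> alg_gen G"
| add: "S \<in> alg_gen G \<Longrightarrow> T \<in> alg_gen G \<Longrightarrow> (\<lambda>i j. S i j + T i j) \<in> alg_gen G"
| smult: "T \<in> alg_gen G \<Longrightarrow> (\<lambda>i j. c * T i j) \<in> alg_gen G"
| mult: "S \<in> alg_gen G \<Longrightarrow> T \<in> alg_gen G \<Longrightarrow> opmul S T \<in> alg_gen G"

definition Balg :: "op2 set" where
  "Balg = alg_gen (CS2q \<union> opcomm Dp ` CS2q)"

text \<open>zeta_T(s) = Trace(T |D'|^(-s)) (defined where the trace series converges, Re s > 1).\<close>

definition zeta_op :: "op2 \<Rightarrow> complex \<Rightarrow> complex" where
  "zeta_op T s = (\<Sum>\<^sub>\<infinity>(k, a)\<in>UNIV. T (k, a) (k, a) * (of_nat (Suc k)) powr (- s))"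

definition mero_ext_poles_in :: "op2 \<Rightarrow> (complex \<Rightarrow> complex) \<Rightarrow> complex set \<Rightarrow> bool" where
  "mero_ext_poles_in T F S \<longleftrightarrow>
     F meromorphic_on UNIV \<and> (\<forall>s. 1 < Re s \<longrightarrow> F s = zeta_op T s) \<and>
     (\<forall>z. z \<notin> S \<longrightarrow> F analytic_on {z})"

definition DSops :: "op2 set" where
  "DSops = (\<Union>j. (delta ^^ j) ` (CS2q \<union> opcomm Dp ` CS2q))"

definition dim_spec_admissible :: "complex set \<Rightarrow> bool" where
  "dim_spec_admissible S \<longleftrightarrow> countable S \<and> (\<forall>T\<in>DSops. \<exists>F. mero_ext_poles_in T F S)"

definition is_dimension_spectrum :: "complex set \<Rightarrow> bool" where
  "is_dimension_spectrum S \<longleftrightarrow> dim_spec_admissible S \<and> (\<forall>S'. dim_spec_admissible S' \<longrightarrow> S \<subseteq> S')"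

definition block :: "op2 \<Rightarrow> bool \<Rightarrow> bool \<Rightarrow> op1" where
  "block T a b = (\<lambda>m n. T (m, a) (n, b))"

text \<open>Trace_{C^2} of (sigma (x) id)(T) at theta.\<close>

definition tr_symb :: "op2 \<Rightarrow> real \<Rightarrow> complex" where
  "tr_symb T \<theta> = sigma (block T False False) \<theta> + sigma (block T True True) \<theta>"

end

theory Submission
  imports Defs
begin

lemma holo_series:
  fixes f :: "nat \<Rightarrow> complex \<Rightarrow> complex"
  assumes S: "open S" and hol: "\<And>n. f n holomorphic_on S"
    and bd: "\<And>x. x \<in> S \<Longrightarrow> \<exists>d h. 0 < d \<and> summable h \<and> (\<forall>\<^sub>F n in sequentially. \<forall>y\<in>ball x d \<inter> S. norm (f n y) \<le> h n)"
  shows "(\<lambda>s. \<Sum>n. f n s) holomorphic_on S" "\<And>x. x \<in> S \<Longrightarrow> summable (\<lambda>n. f n x)"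
proof -
  have d: "\<And>n x. x \<in> S \<Longrightarrow> (f n has_field_derivative deriv (f n) x) (at x)"
    using hol S by (meson holomorphic_derivI)
  obtain g g' where gg: "\<forall>x \<in> S. ((\<lambda>n. f n x) sums g x) \<and> ((\<lambda>n. deriv (f n) x) sums g' x) \<and> (g has_field_derivative g' x) (at x)"
    using series_and_derivative_comparison_local[OF S d bd] by blast
  have "(\<lambda>s. \<Sum>n. f n s) holomorphic_on S \<longleftrightarrow> g holomorphic_on S"
    by (rule holomorphic_cong) (use gg in \<open>auto simp: sums_unique[symmetric]\<close>)
  moreover have "g holomorphic_on S"
    using gg S by (auto simp: holomorphic_on_open)
  ultimately show "(\<lambda>s. \<Sum>n. f n s) holomorphic_on S" by simp
  show "\<And>x. x \<in> S \<Longrightarrow> summable (\<lambda>n. f n x)"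
    using gg sums_summable by blast
qed

lemma norm_gchoose_le:
  fixes a :: complex
  shows "norm (a gchoose k) \<le> (norm a + 1) ^ k"
proof (induction k)
  case 0
  then show ?case by simp
next
  case (Suc k)
  have "norm (a - of_nat k) \<le> norm a + real k"
    by (metis norm_of_nat norm_triangle_ineq4)
  also have "\<dots> \<le> (norm a + 1) * (real k + 1)"
    by (simp add: algebra_simps)
  finally have 1: "norm ((a - of_nat k) / (of_nat k + 1)) \<le> norm a + 1"
    by (simp add: norm_divide divide_le_eq add_pos_nonneg)
       (metis of_nat_Suc norm_of_nat add.commute)
  have "norm (a gchoose Suc k) = norm (a gchoose k) * norm ((a - of_nat k) / (of_nat k + 1))"
    by (simp add: gbinomial_Suc_rec norm_mult norm_divide)
  also have "\<dots> \<le> (norm a + 1) ^ k * (norm a + 1)"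
    by (intro mult_mono Suc 1) auto
  finally show ?case by (simp add: mult.commute)
qed

definition eterm :: "nat \<Rightarrow> complex \<Rightarrow> nat \<Rightarrow> complex" where
  "eterm K s n = of_nat (n+2) powr (1-s) - (\<Sum>k\<le>K. ((1-s) gchoose k) * of_nat (Suc n) powr (1 - s - of_nat k))"

lemma eterm_bound:
  assumes "2 * (norm (1-s) + 1) \<le> real (Suc n)"
  shows "norm (eterm K s n) \<le> 2 * (norm (1-s)+1)^(Suc K) * real (Suc n) powr (- Re s - real K)"
proof -
  define a where "a = 1 - s"
  define y where "y = real (Suc n)"
  define B where "B = norm a + 1"
  have B1: "B \<ge> 1" by (simp add: B_def)
  have yB: "2 * B \<le> y" using assms by (simp add: a_def B_def y_def)
  have y1: "y > 1" using yB B1 by simp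
  define t where "t k = (a gchoose k) * of_nat (Suc n) powr (a - of_nat k)" for k
  have "(\<lambda>k. (a gchoose k) * of_real 1 ^ k * of_real y powr (a - of_nat k)) sums (of_real (1 + y) powr a)"
    by (rule gen_binomial_complex') (use y1 in simp)
  moreover have "of_real y = (of_nat (Suc n) :: complex)" by (simp add: y_def)
  moreover have "of_real (1 + y) = (of_nat (n+2) :: complex)" by (simp add: y_def)
  moreover have "(\<lambda>k. (a gchoose k) * of_real 1 ^ k * of_real y powr (a - of_nat k)) = t"
    by (auto simp: t_def y_def)
  ultimately have ts: "t sums (of_nat (n+2) powr a)" by simp
  have "(\<lambda>i. t (i + Suc K)) sums (of_nat (n+2) powr a - sum t {..<Suc K})"
    using ts by (subst sums_iff_shift') 
  moreover have "sum t {..<Suc K} = (\<Sum>k\<le>K. ((1-s) gchoose k) * of_nat (Suc n) powr (1 - s - of_nat k))"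
    by (simp add: lessThan_Suc_atMost t_def a_def)
  ultimately have es: "(\<lambda>i. t (i + Suc K)) sums eterm K s n"
    by (simp add: eterm_def a_def)
  define Y where "Y = y powr (Re a - real K - 1)"
  have Ypos: "Y > 0" using y1 by (simp add: Y_def)
  have nt: "norm (t (i + Suc K)) \<le> B^(Suc K) * Y * (B/y)^i" for i
  proof -
    have "norm (of_nat (Suc n) powr (a - of_nat (i + Suc K)) :: complex) = y powr (Re a - real (i + Suc K))"
      by (subst norm_powr_real_powr) (auto simp: y_def)
    also have "\<dots> = Y * (1/y)^i"
      using y1 by (simp add: Y_def powr_realpow[symmetric] powr_add[symmetric] powr_divide
                   powr_minus_divide[symmetric] algebra_simps)
    finally have 1: "norm (of_nat (Suc n) powr (a - of_nat (i + Suc K)) :: complex) = Y * (1/y)^i" .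
    have "norm (t (i + Suc K)) = norm (a gchoose (i + Suc K)) * (Y * (1/y)^i)"
      by (simp only: t_def norm_mult 1)
    also have "\<dots> \<le> B^(i + Suc K) * (Y * (1/y)^i)"
      using norm_gchoose_le[of a "i + Suc K"] Ypos y1 unfolding B_def
      by (intro mult_right_mono) auto
    also have "\<dots> = B^(Suc K) * Y * (B/y)^i"
      by (simp add: power_add power_divide field_simps)
    finally show ?thesis .
  qed
  have q: "norm (B / y) < 1" using yB B1 by (simp add: abs_of_pos)
  have "norm (eterm K s n) \<le> (\<Sum>i. B^(Suc K) * Y * (B/y)^i)"
    using es nt q by (metis norm_suminf_le sums_unique summable_geometric summable_mult)
  also have "\<dots> = B^(Suc K) * Y * (1 / (1 - B/y))"
    using q by (simp add: suminf_mult suminf_geometric summable_geometric)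
  also have "\<dots> \<le> B^(Suc K) * Y * 2"
  proof (intro mult_left_mono)
    have h: "B / y \<le> 1/2" using yB B1 y1 by (simp add: divide_le_eq)
    have "1/(1 - B/y) \<le> 1/(1/2)" by (rule divide_left_mono) (use h B1 y1 in \<open>auto simp: field_simps\<close>)
    then show "1 / (1 - B / y) \<le> 2" by simp
  qed (use Ypos B1 in auto)
  also have "\<dots> = 2 * (norm (1-s)+1)^(Suc K) * real (Suc n) powr (- Re s - real K)"
    by (simp add: B_def a_def Y_def y_def)
  finally show ?thesis .
qed

lemma norm_Suc_powr: "norm (of_nat (Suc n) powr z :: complex) = real (Suc n) powr Re z"
  by (subst norm_powr_real_powr) auto

lemma summable_Suc_powr: "p < -1 \<Longrightarrow> summable (\<lambda>n. real (Suc n) powr p)"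
  using summable_real_powr_iff[of p] summable_Suc_iff[of "\<lambda>n. real n powr p"] by simp

lemma eterm_holo: "(\<lambda>s. eterm K s n) holomorphic_on S"
  unfolding eterm_def gbinomial_altdef_of_nat
  by (intro holomorphic_intros holomorphic_on_prod) auto

definition EK :: "nat \<Rightarrow> complex \<Rightarrow> complex" where
  "EK K s = (\<Sum>n. eterm K s n)"

lemma EK_holo:
  shows "EK K holomorphic_on {s. 1 - real K < Re s}"
    and "\<And>s. 1 - real K < Re s \<Longrightarrow> summable (\<lambda>n. eterm K s n)"
proof -
  have "\<exists>d h. 0 < d \<and> summable h \<and> (\<forall>\<^sub>F n in sequentially. \<forall>y\<in>ball x d \<inter> {s. 1 - real K < Re s}. norm (eterm K y n) \<le> h n)"
    if x: "x \<in> {s. 1 - real K < Re s}" for x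
  proof -
    define d where "d = (Re x - (1 - real K)) / 2"
    have d: "d > 0" using x by (simp add: d_def)
    define B0 where "B0 = norm (1 - x) + d + 1"
    define h where "h n = 2 * B0 ^ Suc K * real (Suc n) powr (- 1 - d)" for n
    have sh: "summable h" unfolding h_def
      by (intro summable_mult summable_Suc_powr) (use d in auto)
    have ev: "\<forall>\<^sub>F n in sequentially. 2 * B0 \<le> real (Suc n)"
    proof -
      have "\<forall>\<^sub>F n in sequentially. 2 * B0 \<le> real n"
        using filterlim_real_sequentially by (simp add: filterlim_at_top)
      then show ?thesis by eventually_elim simp
    qed
    have "\<forall>\<^sub>F n in sequentially. \<forall>y\<in>ball x d \<inter> {s. 1 - real K < Re s}. norm (eterm K y n) \<le> h n"
      using ev
    proof eventually_elim
      case (elim n)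
      show ?case
      proof
        fix y assume y: "y \<in> ball x d \<inter> {s. 1 - real K < Re s}"
        then have yx: "norm (x - y) < d" by (simp add: dist_norm)
        have ny: "norm (1 - y) \<le> norm (1 - x) + d"
          using yx norm_triangle_ineq[of "1 - x" "x - y"] by simp
        have rey: "Re y \<ge> Re x - d"
          using yx complex_Re_le_cmod[of "x - y"] by simp
        have B: "norm (1-y) + 1 \<le> B0" using ny by (simp add: B0_def)
        have "norm (eterm K y n) \<le> 2 * (norm (1-y)+1)^(Suc K) * real (Suc n) powr (- Re y - real K)"
          by (rule eterm_bound, rule order.trans[OF _ elim]) (use B in simp)
        also have "\<dots> \<le> 2 * B0^(Suc K) * real (Suc n) powr (- 1 - d)"
        proof (intro mult_mono powr_mono power_mono)
          show "- Re y - real K \<le> - 1 - d" using rey unfolding d_def by (simp add: field_simps)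
        qed (use B d in \<open>auto simp: B0_def\<close>)
        finally show "norm (eterm K y n) \<le> h n" by (simp add: h_def)
      qed
    qed
    then show ?thesis using d sh by blast
  qed
  note bd = this
  show "EK K holomorphic_on {s. 1 - real K < Re s}"
    unfolding EK_def by (rule holo_series(1)[OF open_halfspace_Re_gt eterm_holo bd])
  show "\<And>s. 1 - real K < Re s \<Longrightarrow> summable (\<lambda>n. eterm K s n)"
    by (rule holo_series(2)[OF open_halfspace_Re_gt eterm_holo bd]) auto
qed

definition zs :: "complex \<Rightarrow> complex" where
  "zs s = (\<Sum>n. of_nat (Suc n) powr (-s))"

lemma zs_summable: "1 < Re s \<Longrightarrow> summable (\<lambda>n. norm (of_nat (Suc n) powr (-s) :: complex))"
  unfolding norm_Suc_powr by (rule summable_Suc_powr) simp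

lemma zs_holo: "zs holomorphic_on {s. 1 < Re s}"
proof -
  have "\<exists>d h. 0 < d \<and> summable h \<and> (\<forall>\<^sub>F n in sequentially. \<forall>y\<in>ball x d \<inter> {s. 1 < Re s}. norm (of_nat (Suc n) powr (-y) :: complex) \<le> h n)"
    if x: "x \<in> {s. 1 < Re s}" for x
  proof -
    define d where "d = (Re x - 1) / 2"
    have d: "d > 0" using x by (simp add: d_def)
    have "\<forall>y\<in>ball x d \<inter> {s. 1 < Re s}. norm (of_nat (Suc n) powr (-y) :: complex) \<le> real (Suc n) powr (-1-d)" for n
    proof
      fix y assume y: "y \<in> ball x d \<inter> {s. 1 < Re s}"
      then have yx: "norm (x - y) < d" by (simp add: dist_norm)
      have rey: "Re y \<ge> Re x - d"
        using yx complex_Re_le_cmod[of "x - y"] by simp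
      show "norm (of_nat (Suc n) powr (-y) :: complex) \<le> real (Suc n) powr (-1-d)"
      proof -
        have "-Re y \<le> -1-d" using rey unfolding d_def by (simp add: field_simps)
        then show ?thesis unfolding norm_Suc_powr by (intro powr_mono) auto
      qed
    qed
    moreover have "summable (\<lambda>n. real (Suc n) powr (-1-d))" by (rule summable_Suc_powr) (use d in auto)
    ultimately show ?thesis using d by (intro exI[of _ d] exI[of _ "\<lambda>n. real (Suc n) powr (-1-d)"]) auto
  qed
  then show ?thesis
    unfolding zs_def by (intro holo_series(1)[OF open_halfspace_Re_gt]) (auto intro!: holomorphic_intros)
qed

lemma zeta_identity:
  assumes s: "1 < Re s"
  shows "(s-1) * zs s = 1 - (\<Sum>j<m. ((1-s) gchoose Suc j) / of_nat (j+2) * ((s + of_nat (Suc j) - 1) * zs (s + of_nat (Suc j)))) + EK (Suc m) s"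
proof -
  define N where "N n = (of_nat (Suc n) :: complex)" for n
  define c where "c i = ((1-s) gchoose Suc i)" for i
  have tel: "(\<lambda>n. N n powr (1-s) - N (Suc n) powr (1-s)) sums 1"
  proof -
    have "(\<lambda>n. real n powr (1 - Re s)) \<longlonglongrightarrow> 0"
      by (rule tendsto_neg_powr[OF _ filterlim_real_sequentially]) (use s in simp)
    then have "(\<lambda>n. real (Suc n) powr (1 - Re s)) \<longlonglongrightarrow> 0"
      by (rule LIMSEQ_Suc)
    then have "(\<lambda>n. norm (N n powr (1-s))) \<longlonglongrightarrow> 0"
      by (simp only: N_def norm_Suc_powr) simp
    then have "(\<lambda>n. N n powr (1-s)) \<longlonglongrightarrow> 0"
      by (simp add: tendsto_norm_zero_iff)
    from telescope_sums'[OF this] show ?thesis by (simp add: N_def)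
  qed
  have eq: "N n powr (1-s) - N (Suc n) powr (1-s) = - (\<Sum>i\<le>m. c i * N n powr (-(s + of_nat i))) - eterm (Suc m) s n" for n
  proof -
    have "(\<Sum>k\<le>Suc m. ((1-s) gchoose k) * N n powr (1 - s - of_nat k)) = N n powr (1-s) + (\<Sum>i\<le>m. c i * N n powr (-(s + of_nat i)))"
      by (subst sum.atMost_Suc_shift) (simp add: c_def algebra_simps)
    then show ?thesis
      unfolding eterm_def by (simp add: N_def algebra_simps)
  qed
  have zsum: "(\<lambda>n. N n powr (-(s + of_nat i))) sums zs (s + of_nat i)" for i
  proof -
    have "summable (\<lambda>n. norm (N n powr (-(s + of_nat i))))"
      unfolding N_def by (rule zs_summable) (use s in simp)
    then have "summable (\<lambda>n. N n powr (-(s + of_nat i)))" by (rule summable_norm_cancel)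
    then show ?thesis unfolding zs_def N_def by (rule summable_sums)
  qed
  have esum: "(\<lambda>n. eterm (Suc m) s n) sums EK (Suc m) s"
    unfolding EK_def by (rule summable_sums, rule EK_holo(2)) (use s in simp)
  have "(\<lambda>n. - (\<Sum>i\<le>m. c i * N n powr (-(s + of_nat i))) - eterm (Suc m) s n) sums
          (- (\<Sum>i\<le>m. c i * zs (s + of_nat i)) - EK (Suc m) s)"
    by (intro sums_diff sums_minus sums_sum sums_mult zsum esum)
  moreover have "(\<lambda>n. - (\<Sum>i\<le>m. c i * N n powr (-(s + of_nat i))) - eterm (Suc m) s n) sums 1"
    using tel eq by simp
  ultimately have one: "1 = - (\<Sum>i\<le>m. c i * zs (s + of_nat i)) - EK (Suc m) s"
    using sums_unique2 by blast
  have c0: "c 0 = 1 - s" by (simp add: c_def)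
  have cS: "c (Suc j) * zs (s + of_nat (Suc j)) = - (((1-s) gchoose Suc j) / of_nat (j+2) * ((s + of_nat (Suc j) - 1) * zs (s + of_nat (Suc j))))" for j
  proof -
    have "c (Suc j) = ((1-s) gchoose Suc j) * ((1 - s - of_nat (Suc j)) / (of_nat (Suc j) + 1))"
      unfolding c_def by (rule gbinomial_Suc_rec)
    also have "\<dots> = - (((1-s) gchoose Suc j) / of_nat (j+2) * (s + of_nat (Suc j) - 1))"
    proof -
      have nz: "(of_nat j + 2 :: complex) \<noteq> 0"
      proof -
        have "Re (of_nat j + 2 :: complex) > 0" by simp
        then show ?thesis by (metis order_less_irrefl zero_complex.sel(1))
      qed
      show ?thesis using nz by (simp add: field_simps)
    qed
    finally show ?thesis by simp
  qed
  have "(\<Sum>i\<le>m. c i * zs (s + of_nat i)) = (1 - s) * zs s + (\<Sum>j<m. c (Suc j) * zs (s + of_nat (Suc j)))"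
    by (subst lessThan_Suc_atMost[symmetric], subst sum.lessThan_Suc_shift) (simp add: c0)
  also have "\<dots> = (1 - s) * zs s - (\<Sum>j<m. ((1-s) gchoose Suc j) / of_nat (j+2) * ((s + of_nat (Suc j) - 1) * zs (s + of_nat (Suc j))))"
    unfolding cS sum_negf by simp
  finally show ?thesis using one by (simp add: algebra_simps)
qed

fun zc :: "nat \<Rightarrow> complex \<Rightarrow> complex" where
  "zc 0 s = (s-1) * zs s"
| "zc (Suc m) s = 1 - (\<Sum>j<m. ((1-s) gchoose Suc j) / of_nat (j+2) * zc m (s + of_nat (Suc j))) + EK (Suc m) s"

lemma gchoose_holo: "(\<lambda>s. (f s) gchoose k) holomorphic_on S" if "f holomorphic_on S"
  unfolding gbinomial_altdef_of_nat using that
  by (intro holomorphic_on_prod holomorphic_intros) auto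

lemma zc_props: "zc m holomorphic_on {s. 1 - real m < Re s} \<and> (\<forall>s. 1 < Re s \<longrightarrow> zc m s = zc 0 s)"
proof (induction m)
  case 0
  have "(\<lambda>s. (s-1) * zs s) holomorphic_on {s. 1 < Re s}"
    by (intro holomorphic_intros zs_holo)
  then show ?case by simp
next
  case (Suc m)
  have h1: "(\<lambda>s. zc m (s + of_nat (Suc j))) holomorphic_on {s. 1 - real (Suc m) < Re s}" for j
  proof -
    have "zc m \<circ> (\<lambda>s. s + of_nat (Suc j)) holomorphic_on {s. 1 - real (Suc m) < Re s}"
    proof (rule holomorphic_on_compose)
      show "(\<lambda>s. s + of_nat (Suc j)) holomorphic_on {s. 1 - real (Suc m) < Re s}"
        by (intro holomorphic_intros)
      show "zc m holomorphic_on (\<lambda>s. s + of_nat (Suc j)) ` {s. 1 - real (Suc m) < Re s}"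
        by (rule holomorphic_on_subset[OF Suc.IH[THEN conjunct1]]) auto
    qed
    then show ?thesis by (simp add: o_def)
  qed
  have "zc (Suc m) holomorphic_on {s. 1 - real (Suc m) < Re s}"
    unfolding zc.simps
    by (intro holomorphic_intros EK_holo(1) gchoose_holo h1) auto
  moreover have "zc (Suc m) s = zc 0 s" if s: "1 < Re s" for s
  proof -
    have "zc m (s + of_nat (Suc j)) = (s + of_nat (Suc j) - 1) * zs (s + of_nat (Suc j))" for j
      using Suc.IH s by simp
    then have "zc (Suc m) s = 1 - (\<Sum>j<m. ((1-s) gchoose Suc j) / of_nat (j+2) * ((s + of_nat (Suc j) - 1) * zs (s + of_nat (Suc j)))) + EK (Suc m) s"
      by simp
    also have "\<dots> = zc 0 s" using zeta_identity[OF s, of m] by simp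
    finally show ?thesis .
  qed
  ultimately show ?case by blast
qed

lemma zc_consistent:
  assumes "m \<le> m'" "1 - real m < Re s"
  shows "zc m s = zc m' s"
proof (rule analytic_continuation_open[of "{s. 1 < Re s}" "{s. 1 - real m < Re s}" "zc m" "zc m'"])
  show "open {s. 1 < Re s}" "open {s. 1 - real m < Re s}" by (rule open_halfspace_Re_gt)+
  show "{s. 1 < Re s} \<noteq> {}" by (auto intro: exI[of _ 2])
  show "connected {s. 1 - real m < Re s}" by (rule convex_connected, rule convex_halfspace_Re_gt)
  show "{s. 1 < Re s} \<subseteq> {s. 1 - real m < Re s}" by auto
  show "zc m holomorphic_on {s. 1 - real m < Re s}" using zc_props by blast
  show "zc m' holomorphic_on {s. 1 - real m < Re s}"
    by (rule holomorphic_on_subset[OF zc_props[THEN conjunct1]]) (use assms in auto)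
  show "\<And>z. z \<in> {s. 1 < Re s} \<Longrightarrow> zc m z = zc m' z" using zc_props by simp
  show "s \<in> {s. 1 - real m < Re s}" using assms by simp
qed

definition lvl :: "complex \<Rightarrow> nat" where
  "lvl s = nat \<lfloor>1 - Re s\<rfloor> + 1"

lemma lvl_ok: "1 - real (lvl s) < Re s"
proof -
  have "real_of_int \<lfloor>1 - Re s\<rfloor> > 1 - Re s - 1" by linarith
  moreover have "real (nat \<lfloor>1 - Re s\<rfloor>) \<ge> real_of_int \<lfloor>1 - Re s\<rfloor>" by simp
  ultimately show ?thesis unfolding lvl_def by simp
qed

definition Zf :: "complex \<Rightarrow> complex" where
  "Zf s = zc (lvl s) s"

lemma Zf_holo: "Zf holomorphic_on UNIV"
proof -
  have "Zf analytic_on {x}" for x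
  proof -
    define M where "M = lvl x + 1"
    define U where "U = {s. Re x - 1/2 < Re s}"
    have eq: "Zf y = zc M y" if y: "y \<in> U" for y
    proof -
      have "real_of_int \<lfloor>1 - Re y\<rfloor> < real_of_int (\<lfloor>1 - Re x\<rfloor> + 2)"
      proof -
        have yy: "Re x - 1/2 < Re y" using y by (simp add: U_def)
        show ?thesis using yy floor_correct[of "1 - Re y"] floor_correct[of "1 - Re x"]
          unfolding of_int_add of_int_1 of_int_numeral by linarith
      qed
      then have "\<lfloor>1 - Re y\<rfloor> \<le> \<lfloor>1 - Re x\<rfloor> + 1" by linarith
      then have "lvl y \<le> M" unfolding lvl_def M_def by linarith
      then show ?thesis unfolding Zf_def by (rule zc_consistent) (rule lvl_ok)
    qed
    have "zc M holomorphic_on U"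
    proof (rule holomorphic_on_subset[OF zc_props[THEN conjunct1]])
      show "U \<subseteq> {s. 1 - real M < Re s}" using lvl_ok[of x] by (auto simp: U_def M_def)
    qed
    then have "Zf holomorphic_on U" by (rule holomorphic_transform) (use eq in auto)
    then have "Zf analytic_on U" by (simp add: U_def analytic_on_open open_halfspace_Re_gt)
    then show ?thesis by (rule analytic_on_subset) (simp add: U_def)
  qed
  then have "Zf analytic_on UNIV" using analytic_on_analytic_at by blast
  then show ?thesis by (rule analytic_imp_holomorphic)
qed

lemma Re_pos_nz: "0 < Re z \<Longrightarrow> z \<noteq> 0"
  by (metis order_less_irrefl zero_complex.sel(1))

lemma Zf_1: "Zf 1 = 1"
proof -
  have "lvl 1 = 1" by (simp add: lvl_def)
  moreover have "eterm 1 1 n = 0" for n by (simp add: eterm_def Re_pos_nz)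
  ultimately show ?thesis by (simp add: Zf_def EK_def)
qed

lemma Zf_eq: "1 < Re s \<Longrightarrow> Zf s = (s-1) * zs s"
  using zc_props[of "lvl s"] by (simp add: Zf_def)

definition wr :: "nat \<Rightarrow> real \<Rightarrow> real" where
  "wr p x = 1 / (1 + x) ^ p"

lemma wr_nonneg: "0 \<le> x \<Longrightarrow> 0 \<le> wr p x"
  by (simp add: wr_def)

lemma wr_pos: "0 \<le> x \<Longrightarrow> 0 < wr p x"
  by (simp add: wr_def)

lemma wr_le1: "0 \<le> x \<Longrightarrow> wr p x \<le> 1"
  by (simp add: wr_def divide_le_eq one_le_power)

lemma wr_add: "wr (p + q) x = wr p x * wr q x"
  by (simp add: wr_def power_add)

lemma wr_antimono: "0 \<le> x \<Longrightarrow> x \<le> y \<Longrightarrow> wr p y \<le> wr p x"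
  unfolding wr_def by (intro divide_left_mono power_mono mult_pos_pos) auto

lemma wr_le_p: "0 \<le> x \<Longrightarrow> p \<le> q \<Longrightarrow> wr q x \<le> wr p x"
proof -
  assume x: "0 \<le> x" and pq: "p \<le> q"
  then obtain r where q: "q = p + r" using le_Suc_ex by blast
  have "wr q x = wr p x * wr r x" by (simp add: q wr_add)
  also have "\<dots> \<le> wr p x * 1" by (intro mult_left_mono wr_le1 wr_nonneg x)
  finally show ?thesis by simp
qed

lemma peetre:
  assumes "0 \<le> a" "0 \<le> b" "0 \<le> c" "c \<le> a + b"
  shows "wr p a * wr p b \<le> wr p c"
proof -
  have ab: "0 \<le> a * b" using assms by simp
  have e: "(1 + a) * (1 + b) = 1 + a + b + a * b" by (simp add: algebra_simps)
  have "1 + c \<le> (1 + a) * (1 + b)" unfolding e using assms ab by linarith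
  then have "(1 + c) ^ p \<le> ((1 + a) * (1 + b)) ^ p" by (intro power_mono) (use assms in auto)
  then have "(1 + c) ^ p \<le> (1 + a) ^ p * (1 + b) ^ p" by (simp add: power_mult_distrib)
  then show ?thesis using assms unfolding wr_def
    by (simp add: divide_simps mult_pos_pos)
qed

definition RDS :: "(int \<Rightarrow> complex) \<Rightarrow> bool" where
  "RDS g \<longleftrightarrow> (\<forall>p. \<exists>C. \<forall>n. norm (g n) \<le> C * wr p \<bar>of_int n\<bar>)"

definition RDM :: "(nat \<Rightarrow> nat \<Rightarrow> complex) \<Rightarrow> bool" where
  "RDM h \<longleftrightarrow> (\<forall>p. \<exists>C. \<forall>j k. norm (h j k) \<le> C * wr p (real j) * wr p (real k))"

lemma RDS_iff: "rapid_decay_seq g \<longleftrightarrow> RDS g"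
proof
  assume a: "rapid_decay_seq g"
  show "RDS g" unfolding RDS_def
  proof
    fix p
    obtain C where C: "\<And>n. (1 + real_of_int \<bar>n\<bar>) ^ p * norm (g n) \<le> C"
      using a unfolding rapid_decay_seq_def by blast
    have "norm (g n) \<le> C * wr p \<bar>of_int n\<bar>" for n
      using C[of n] by (simp add: wr_def field_simps)
    then show "\<exists>C. \<forall>n. norm (g n) \<le> C * wr p \<bar>of_int n\<bar>" by blast
  qed
next
  assume a: "RDS g"
  show "rapid_decay_seq g" unfolding rapid_decay_seq_def
  proof
    fix p
    obtain C where C: "\<And>n. norm (g n) \<le> C * wr p \<bar>of_int n\<bar>"
      using a unfolding RDS_def by blast
    have "(1 + real_of_int \<bar>n\<bar>) ^ p * norm (g n) \<le> C" for n
      using C[of n] by (simp add: wr_def field_simps)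
    then show "\<exists>C. \<forall>n. (1 + real_of_int \<bar>n\<bar>) ^ p * norm (g n) \<le> C" by blast
  qed
qed

lemma RDM_iff: "rapid_decay_mat h \<longleftrightarrow> RDM h"
proof
  assume a: "rapid_decay_mat h"
  show "RDM h" unfolding RDM_def
  proof
    fix p
    obtain C where C: "\<And>j k. (1 + real j + real k) ^ (2*p) * norm (h j k) \<le> C"
      using a unfolding rapid_decay_mat_def by blast
    have "norm (h j k) \<le> C * wr p (real j) * wr p (real k)" for j k
    proof -
      have "(1 + real j) * (1 + real k) \<le> (1 + real j + real k) ^ 2"
        by (simp add: power2_eq_square algebra_simps)
      then have "((1 + real j) * (1 + real k)) ^ p \<le> ((1 + real j + real k) ^ 2) ^ p"
        by (intro power_mono) auto
      then have le: "(1 + real j) ^ p * (1 + real k) ^ p \<le> (1 + real j + real k) ^ (2*p)"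
        by (simp add: power_mult_distrib power_mult)
      have "(1 + real j) ^ p * (1 + real k) ^ p * norm (h j k) \<le> (1 + real j + real k) ^ (2*p) * norm (h j k)"
        by (intro mult_right_mono le) auto
      also have "\<dots> \<le> C" by (rule C)
      finally show ?thesis by (simp add: wr_def field_simps)
    qed
    then show "\<exists>C. \<forall>j k. norm (h j k) \<le> C * wr p (real j) * wr p (real k)" by blast
  qed
next
  assume a: "RDM h"
  show "rapid_decay_mat h" unfolding rapid_decay_mat_def
  proof
    fix p
    obtain C where C: "\<And>j k. norm (h j k) \<le> C * wr p (real j) * wr p (real k)"
      using a unfolding RDM_def by blast
    have "(1 + real j + real k) ^ p * norm (h j k) \<le> C" for j k
    proof -
      have "(1 + real j + real k) ^ p \<le> ((1 + real j) * (1 + real k)) ^ p"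
        by (intro power_mono) (auto simp: algebra_simps)
      then have le: "(1 + real j + real k) ^ p \<le> (1 + real j) ^ p * (1 + real k) ^ p"
        by (simp add: power_mult_distrib)
      have "(1 + real j + real k) ^ p * norm (h j k) \<le> (1 + real j) ^ p * (1 + real k) ^ p * norm (h j k)"
        by (intro mult_right_mono le) auto
      also have "\<dots> \<le> C" using C[of j k] by (simp add: wr_def field_simps)
      finally show ?thesis .
    qed
    then show "\<exists>C. \<forall>j k. (1 + real j + real k) ^ p * norm (h j k) \<le> C" by blast
  qed
qed

lemma Ainf_iff: "A \<in> Ainf \<longleftrightarrow> (\<exists>g h. RDS g \<and> RDM h \<and> A = toep_op g h)"
  by (auto simp: Ainf_def RDS_iff RDM_iff)

definition SW :: real where "SW = (\<Sum>k. wr 2 (real k))"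

lemma summable_wr2: "summable (\<lambda>k::nat. wr 2 (real k))"
proof -
  have "summable (\<lambda>n::nat. inverse (real n ^ 2))" by (rule inverse_power_summable) simp
  then have "summable (\<lambda>n. inverse (real (Suc n) ^ 2))" by (subst summable_Suc_iff)
  moreover have "inverse (real (Suc n) ^ 2) = wr 2 (real n)" for n
    by (simp add: wr_def field_simps)
  ultimately show ?thesis by simp
qed

lemma nat_bound:
  fixes f :: "nat \<Rightarrow> complex"
  assumes le: "\<And>k. norm (f k) \<le> b k" and b: "summable b"
  shows "f summable_on UNIV" "infsum f UNIV = suminf f" "norm (infsum f UNIV) \<le> suminf b"
proof -
  have s1: "summable (\<lambda>k. norm (f k))"
    by (rule summable_comparison_test[OF _ b]) (use le in auto)
  have hs: "(f has_sum suminf f) UNIV"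
    by (rule norm_summable_imp_has_sum[OF s1 summable_sums[OF summable_norm_cancel[OF s1]]])
  then show "f summable_on UNIV" by (auto simp: summable_on_def)
  show e: "infsum f UNIV = suminf f" using hs by (rule infsumI)
  show "norm (infsum f UNIV) \<le> suminf b" unfolding e by (rule norm_suminf_le[OF le b])
qed

lemma nat_bound_wr:
  fixes f :: "nat \<Rightarrow> complex"
  assumes le: "\<And>k. norm (f k) \<le> C * wr 2 (real k)"
  shows "f summable_on UNIV" "norm (infsum f UNIV) \<le> C * SW"
proof -
  have b: "summable (\<lambda>k. C * wr 2 (real k))" by (intro summable_mult summable_wr2)
  show "f summable_on UNIV" by (rule nat_bound(1)[OF le b])
  have "norm (infsum f UNIV) \<le> (\<Sum>k. C * wr 2 (real k))" by (rule nat_bound(3)[OF le b])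
  also have "\<dots> = C * SW" unfolding SW_def by (rule suminf_mult[OF summable_wr2])
  finally show "norm (infsum f UNIV) \<le> C * SW" .
qed

lemma SW_nonneg: "0 \<le> SW"
  unfolding SW_def by (intro suminf_nonneg summable_wr2 wr_nonneg) auto

lemma int_univ: "(UNIV :: int set) = range int \<union> range (\<lambda>j. - int j - 1)"
proof -
  have "n \<in> range int \<union> range (\<lambda>j. - int j - 1)" for n :: int
  proof (cases "n \<ge> 0")
    case True
    then have "n = int (nat n)" by simp
    then show ?thesis by blast
  next
    case False
    then have "n = - int (nat (- n - 1)) - 1" by simp
    then show ?thesis by blast
  qed
  then show ?thesis by blast
qed

lemma int_split:
  fixes f :: "int \<Rightarrow> complex"
  assumes a: "(\<lambda>k::nat. f (int k)) summable_on UNIV" and b: "(\<lambda>j::nat. f (- int j - 1)) summable_on UNIV"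
  shows "f summable_on UNIV" "infsum f UNIV = infsum (\<lambda>k. f (int k)) UNIV + infsum (\<lambda>j. f (- int j - 1)) UNIV"
proof -
  have i1: "inj (int :: nat \<Rightarrow> int)" by (simp add: inj_def)
  have i2: "inj (\<lambda>j::nat. - int j - 1)" by (simp add: inj_def)
  have sA: "f summable_on range int" using a by (subst summable_on_reindex[OF i1]) (simp add: o_def)
  have sB: "f summable_on range (\<lambda>j::nat. - int j - 1)" using b by (subst summable_on_reindex[OF i2]) (simp add: o_def)
  have dj: "range int \<inter> range (\<lambda>j::nat. - int j - 1) = {}" by auto
  show "f summable_on UNIV" unfolding int_univ by (rule summable_on_Un_disjoint[OF sA sB dj])
  have "infsum f UNIV = infsum f (range int) + infsum f (range (\<lambda>j::nat. - int j - 1))"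
    unfolding int_univ by (rule infsum_Un_disjoint[OF sA sB dj])
  also have "\<dots> = infsum (\<lambda>k. f (int k)) UNIV + infsum (\<lambda>j. f (- int j - 1)) UNIV"
    by (simp add: infsum_reindex[OF i1] infsum_reindex[OF i2] o_def)
  finally show "infsum f UNIV = infsum (\<lambda>k. f (int k)) UNIV + infsum (\<lambda>j. f (- int j - 1)) UNIV" .
qed

lemma int_bound:
  fixes f :: "int \<Rightarrow> complex"
  assumes le: "\<And>n. norm (f n) \<le> C * wr 2 \<bar>of_int n\<bar>"
  shows "f summable_on UNIV" "norm (infsum f UNIV) \<le> 2 * C * SW"
proof -
  have C: "0 \<le> C"
  proof -
    have "0 \<le> C * wr 2 \<bar>of_int 0\<bar>" using le[of 0] norm_ge_zero order_trans by blast
    then show ?thesis using wr_pos[of 0 2] by (simp add: zero_le_mult_iff)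
  qed
  have l1: "norm (f (int k)) \<le> C * wr 2 (real k)" for k using le[of "int k"] by simp
  have l2: "norm (f (- int j - 1)) \<le> C * wr 2 (real j)" for j
  proof -
    have "norm (f (- int j - 1)) \<le> C * wr 2 \<bar>of_int (- int j - 1)\<bar>" by (rule le)
    also have "\<dots> \<le> C * wr 2 (real j)"
      by (intro mult_left_mono wr_antimono C) auto
    finally show ?thesis .
  qed
  note s1 = nat_bound_wr[of "\<lambda>k. f (int k)", OF l1] and s2 = nat_bound_wr[of "\<lambda>j. f (- int j - 1)", OF l2]
  show "f summable_on UNIV" by (rule int_split(1)[OF s1(1) s2(1)])
  have "norm (infsum f UNIV) \<le> norm (infsum (\<lambda>k. f (int k)) UNIV) + norm (infsum (\<lambda>j. f (- int j - 1)) UNIV)"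
    unfolding int_split(2)[OF s1(1) s2(1)] by (rule norm_triangle_ineq)
  also have "\<dots> \<le> C * SW + C * SW" by (intro add_mono s1(2) s2(2))
  finally show "norm (infsum f UNIV) \<le> 2 * C * SW" by simp
qed

lemma const_nonneg: "norm x \<le> C * w \<Longrightarrow> 0 < w \<Longrightarrow> 0 \<le> (C::real)"
  by (metis norm_ge_zero order_trans zero_le_mult_iff not_le)

lemma RDS_E:
  assumes "RDS g"
  obtains C where "0 \<le> C" "\<And>n. norm (g n) \<le> C * wr p \<bar>of_int n\<bar>"
proof -
  obtain C where C: "\<And>n. norm (g n) \<le> C * wr p \<bar>of_int n\<bar>" using assms unfolding RDS_def by blast
  have "0 \<le> C" by (rule const_nonneg[OF C[of 0]]) (simp add: wr_pos)
  then show ?thesis using C that by blast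
qed

lemma RDM_E:
  assumes "RDM h"
  obtains C where "0 \<le> C" "\<And>j k. norm (h j k) \<le> C * wr p (real j) * wr p (real k)"
proof -
  obtain C where C: "\<And>j k. norm (h j k) \<le> C * wr p (real j) * wr p (real k)" using assms unfolding RDM_def by blast
  have "0 \<le> C" by (rule const_nonneg[of "h 0 0" C "wr p 0 * wr p 0"]) (use C[of 0 0] in \<open>simp_all add: wr_pos mult.assoc\<close>)
  then show ?thesis using C that by blast
qed

lemma norm_mult_le: "norm a \<le> A \<Longrightarrow> norm b \<le> B \<Longrightarrow> norm (a * b :: complex) \<le> A * B"
  by (simp add: norm_mult mult_mono')

lemma wr_p2: "wr (p+2) x = wr p x * wr 2 x"
  by (rule wr_add)

lemma peetre_nat: "wr p \<bar>real m - real k\<bar> * wr p (real k) \<le> wr p (real m)"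
  by (rule peetre) auto

lemma peetre_nat': "wr p (real k) * wr p \<bar>real k - real n\<bar> \<le> wr p (real n)"
  by (rule peetre) auto

lemma TxS:
  assumes g: "RDS g" and h: "RDM h"
  shows "(\<lambda>k. g (int m - int k) * h k n) summable_on UNIV"
    and "RDM (\<lambda>m n. \<Sum>\<^sub>\<infinity>k. g (int m - int k) * h k n)"
proof -
  have main: "\<exists>C. \<forall>m n. (\<lambda>k. g (int m - int k) * h k n) summable_on UNIV \<and>
       norm (\<Sum>\<^sub>\<infinity>k. g (int m - int k) * h k n) \<le> C * wr p (real m) * wr p (real n)" for p
  proof -
    obtain C1 where C1: "0 \<le> C1" "\<And>n. norm (g n) \<le> C1 * wr p \<bar>of_int n\<bar>" using RDS_E[OF g] by blast
    obtain C2 where C2: "0 \<le> C2" "\<And>j k. norm (h j k) \<le> C2 * wr (p+2) (real j) * wr (p+2) (real k)"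
      using RDM_E[OF h] by blast
    have bd: "norm (g (int m - int k) * h k n) \<le> (C1 * C2 * wr p (real m) * wr p (real n)) * wr 2 (real k)" for m n k
    proof -
      have "norm (g (int m - int k) * h k n) \<le> (C1 * wr p \<bar>real m - real k\<bar>) * (C2 * wr (p+2) (real k) * wr (p+2) (real n))"
        by (rule norm_mult_le) (use C1(2)[of "int m - int k"] C2(2)[of k n] in simp_all)
      also have "\<dots> = (C1 * C2 * wr 2 (real k)) * ((wr p \<bar>real m - real k\<bar> * wr p (real k)) * wr (p+2) (real n))"
        by (simp only: wr_p2) (simp add: mult_ac)
      also have "\<dots> \<le> (C1 * C2 * wr 2 (real k)) * (wr p (real m) * wr p (real n))"
        by (intro mult_left_mono mult_mono peetre_nat wr_le_p) (auto intro!: wr_nonneg mult_nonneg_nonneg C1 C2)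
      finally show ?thesis by (simp add: mult_ac)
    qed
    show ?thesis
      by (rule exI[of _ "C1 * C2 * SW"]) (use nat_bound_wr[OF bd] in \<open>auto simp: mult_ac\<close>)
  qed
  show "(\<lambda>k. g (int m - int k) * h k n) summable_on UNIV" using main[of 0] by blast
  show "RDM (\<lambda>m n. \<Sum>\<^sub>\<infinity>k. g (int m - int k) * h k n)" unfolding RDM_def using main by blast
qed

lemma SxT:
  assumes h: "RDM h" and g: "RDS g"
  shows "(\<lambda>k. h m k * g (int k - int n)) summable_on UNIV"
    and "RDM (\<lambda>m n. \<Sum>\<^sub>\<infinity>k. h m k * g (int k - int n))"
proof -
  have main: "\<exists>C. \<forall>m n. (\<lambda>k. h m k * g (int k - int n)) summable_on UNIV \<and>
       norm (\<Sum>\<^sub>\<infinity>k. h m k * g (int k - int n)) \<le> C * wr p (real m) * wr p (real n)" for p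
  proof -
    obtain C1 where C1: "0 \<le> C1" "\<And>n. norm (g n) \<le> C1 * wr p \<bar>of_int n\<bar>" using RDS_E[OF g] by blast
    obtain C2 where C2: "0 \<le> C2" "\<And>j k. norm (h j k) \<le> C2 * wr (p+2) (real j) * wr (p+2) (real k)"
      using RDM_E[OF h] by blast
    have bd: "norm (h m k * g (int k - int n)) \<le> (C1 * C2 * wr p (real m) * wr p (real n)) * wr 2 (real k)" for m n k
    proof -
      have "norm (h m k * g (int k - int n)) \<le> (C2 * wr (p+2) (real m) * wr (p+2) (real k)) * (C1 * wr p \<bar>real k - real n\<bar>)"
        by (rule norm_mult_le) (use C1(2)[of "int k - int n"] C2(2)[of m k] in simp_all)
      also have "\<dots> = (C1 * C2 * wr 2 (real k)) * (wr (p+2) (real m) * (wr p (real k) * wr p \<bar>real k - real n\<bar>))"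
        by (simp only: wr_p2) (simp add: mult_ac)
      also have "\<dots> \<le> (C1 * C2 * wr 2 (real k)) * (wr p (real m) * wr p (real n))"
        by (intro mult_left_mono mult_mono peetre_nat' wr_le_p) (auto intro!: wr_nonneg mult_nonneg_nonneg C1 C2)
      finally show ?thesis by (simp add: mult_ac)
    qed
    show ?thesis
      by (rule exI[of _ "C1 * C2 * SW"]) (use nat_bound_wr[OF bd] in \<open>auto simp: mult_ac\<close>)
  qed
  show "(\<lambda>k. h m k * g (int k - int n)) summable_on UNIV" using main[of 0] by blast
  show "RDM (\<lambda>m n. \<Sum>\<^sub>\<infinity>k. h m k * g (int k - int n))" unfolding RDM_def using main by blast
qed

lemma SxS:
  assumes h: "RDM h" and h': "RDM h'"
  shows "(\<lambda>k. h m k * h' k n) summable_on UNIV"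
    and "RDM (\<lambda>m n. \<Sum>\<^sub>\<infinity>k. h m k * h' k n)"
proof -
  have main: "\<exists>C. \<forall>m n. (\<lambda>k. h m k * h' k n) summable_on UNIV \<and>
       norm (\<Sum>\<^sub>\<infinity>k. h m k * h' k n) \<le> C * wr p (real m) * wr p (real n)" for p
  proof -
    obtain C1 where C1: "0 \<le> C1" "\<And>j k. norm (h j k) \<le> C1 * wr (p+2) (real j) * wr (p+2) (real k)"
      using RDM_E[OF h] by blast
    obtain C2 where C2: "0 \<le> C2" "\<And>j k. norm (h' j k) \<le> C2 * wr p (real j) * wr p (real k)"
      using RDM_E[OF h'] by blast
    have bd: "norm (h m k * h' k n) \<le> (C1 * C2 * wr p (real m) * wr p (real n)) * wr 2 (real k)" for m n k
    proof -
      have "norm (h m k * h' k n) \<le> (C1 * wr (p+2) (real m) * wr (p+2) (real k)) * (C2 * wr p (real k) * wr p (real n))"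
        by (rule norm_mult_le) (use C1(2)[of m k] C2(2)[of k n] in simp_all)
      also have "\<dots> = (C1 * C2) * ((wr (p+2) (real m) * wr p (real n)) * (wr (p+2) (real k) * wr p (real k)))"
        by (simp add: mult_ac)
      also have "\<dots> \<le> (C1 * C2) * ((wr p (real m) * wr p (real n)) * (wr 2 (real k) * 1))"
        by (intro mult_left_mono mult_mono wr_le_p wr_le1) (auto intro!: wr_nonneg mult_nonneg_nonneg C1 C2)
      finally show ?thesis by (simp add: mult_ac)
    qed
    show ?thesis
      by (rule exI[of _ "C1 * C2 * SW"]) (use nat_bound_wr[OF bd] in \<open>auto simp: mult_ac\<close>)
  qed
  show "(\<lambda>k. h m k * h' k n) summable_on UNIV" using main[of 0] by blast
  show "RDM (\<lambda>m n. \<Sum>\<^sub>\<infinity>k. h m k * h' k n)" unfolding RDM_def using main by blast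
qed

definition hank :: "(int \<Rightarrow> complex) \<Rightarrow> (int \<Rightarrow> complex) \<Rightarrow> nat \<Rightarrow> nat \<Rightarrow> complex" where
  "hank g g' m n = (\<Sum>\<^sub>\<infinity>j. g (int m + int j + 1) * g' (- int j - 1 - int n))"

lemma Hank:
  assumes g: "RDS g" and g': "RDS g'"
  shows "(\<lambda>j. g (int m + int j + 1) * g' (- int j - 1 - int n)) summable_on UNIV"
    and "RDM (hank g g')"
proof -
  have main: "\<exists>C. \<forall>m n. (\<lambda>j. g (int m + int j + 1) * g' (- int j - 1 - int n)) summable_on UNIV \<and>
       norm (hank g g' m n) \<le> C * wr p (real m) * wr p (real n)" for p
  proof -
    obtain C1 where C1: "0 \<le> C1" "\<And>n. norm (g n) \<le> C1 * wr (p+2) \<bar>of_int n\<bar>" using RDS_E[OF g] by blast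
    obtain C2 where C2: "0 \<le> C2" "\<And>n. norm (g' n) \<le> C2 * wr p \<bar>of_int n\<bar>" using RDS_E[OF g'] by blast
    have bd: "norm (g (int m + int j + 1) * g' (- int j - 1 - int n)) \<le> (C1 * C2 * wr p (real m) * wr p (real n)) * wr 2 (real j)" for m n j
    proof -
      have "norm (g (int m + int j + 1) * g' (- int j - 1 - int n)) \<le> (C1 * wr (p+2) (real m + real j + 1)) * (C2 * wr p (real j + 1 + real n))"
      proof -
        have a1: "\<bar>real_of_int (int m + int j + 1)\<bar> = real m + real j + 1" by simp
        have a2: "\<bar>real_of_int (- int j - 1 - int n)\<bar> = real j + 1 + real n" by simp
        show ?thesis using C1(2)[of "int m + int j + 1"] C2(2)[of "- int j - 1 - int n"]
          unfolding a1 a2 by (rule norm_mult_le)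
      qed
      also have "\<dots> = (C1 * C2) * ((wr p (real m + real j + 1) * wr p (real j + 1 + real n)) * wr 2 (real m + real j + 1))"
        by (simp only: wr_p2) (simp add: mult_ac)
      also have "\<dots> \<le> (C1 * C2) * ((wr p (real m) * wr p (real n)) * wr 2 (real j))"
        by (intro mult_left_mono mult_mono wr_antimono) (auto intro!: wr_nonneg mult_nonneg_nonneg C1 C2)
      finally show ?thesis by (simp add: mult_ac)
    qed
    show ?thesis
      by (rule exI[of _ "C1 * C2 * SW"]) (use nat_bound_wr[OF bd] in \<open>auto simp: mult_ac hank_def\<close>)
  qed
  show "(\<lambda>j. g (int m + int j + 1) * g' (- int j - 1 - int n)) summable_on UNIV" using main[of 0] by blast
  show "RDM (hank g g')" unfolding RDM_def using main by blast
qed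

definition conv :: "(int \<Rightarrow> complex) \<Rightarrow> (int \<Rightarrow> complex) \<Rightarrow> int \<Rightarrow> complex" where
  "conv g g' d = (\<Sum>\<^sub>\<infinity>l. g l * g' (d - l))"

lemma Conv:
  assumes g: "RDS g" and g': "RDS g'"
  shows "(\<lambda>l. g l * g' (d - l)) summable_on UNIV"
    and "RDS (conv g g')"
proof -
  have main: "\<exists>C. \<forall>d. (\<lambda>l. g l * g' (d - l)) summable_on UNIV \<and>
       norm (conv g g' d) \<le> C * wr p \<bar>of_int d\<bar>" for p
  proof -
    obtain C1 where C1: "0 \<le> C1" "\<And>n. norm (g n) \<le> C1 * wr (p+2) \<bar>of_int n\<bar>" using RDS_E[OF g] by blast
    obtain C2 where C2: "0 \<le> C2" "\<And>n. norm (g' n) \<le> C2 * wr p \<bar>of_int n\<bar>" using RDS_E[OF g'] by blast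
    have bd: "norm (g l * g' (d - l)) \<le> (C1 * C2 * wr p \<bar>of_int d\<bar>) * wr 2 \<bar>of_int l\<bar>" for d l
    proof -
      have "norm (g l * g' (d - l)) \<le> (C1 * wr (p+2) \<bar>of_int l\<bar>) * (C2 * wr p \<bar>of_int (d - l)\<bar>)"
        by (rule norm_mult_le) (use C1(2)[of l] C2(2)[of "d - l"] in simp_all)
      also have "\<dots> = (C1 * C2 * wr 2 \<bar>of_int l\<bar>) * (wr p \<bar>of_int l\<bar> * wr p \<bar>of_int (d - l)\<bar>)"
        by (simp only: wr_p2) (simp add: mult_ac)
      also have "\<dots> \<le> (C1 * C2 * wr 2 \<bar>of_int l\<bar>) * wr p \<bar>of_int d\<bar>"
        by (intro mult_left_mono peetre) (auto intro!: wr_nonneg mult_nonneg_nonneg C1 C2)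
      finally show ?thesis by (simp add: mult_ac)
    qed
    show ?thesis
      by (rule exI[of _ "2 * (C1 * C2) * SW"]) (use int_bound[OF bd] in \<open>auto simp: mult_ac conv_def\<close>)
  qed
  show "(\<lambda>l. g l * g' (d - l)) summable_on UNIV" using main[of 0] by blast
  show "RDS (conv g g')" unfolding RDS_def using main by blast
qed

lemma TxT:
  assumes g: "RDS g" and g': "RDS g'"
  shows "(\<lambda>k. g (int m - int k) * g' (int k - int n)) summable_on UNIV"
    and "(\<Sum>\<^sub>\<infinity>k. g (int m - int k) * g' (int k - int n)) = conv g g' (int m - int n) - hank g g' m n"
proof -
  define f where "f t = g (int m - t) * g' (t - int n)" for t
  define F where "F l = g l * g' ((int m - int n) - l)" for l
  have bij: "bij_betw (\<lambda>t. int m - t) UNIV UNIV"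
    by (rule bij_betwI[where g = "\<lambda>l. int m - l"]) auto
  have fF: "f = (\<lambda>t. F (int m - t))" by (auto simp: f_def F_def)
  have sF: "F summable_on UNIV" unfolding F_def by (rule Conv(1)[OF g g'])
  have sf: "f summable_on UNIV" unfolding fF by (subst summable_on_reindex_bij_betw[OF bij]) (rule sF)
  have ef: "infsum f UNIV = conv g g' (int m - int n)"
    unfolding fF conv_def F_def[symmetric] by (rule infsum_reindex_bij_betw[OF bij])
  have s1: "(\<lambda>k::nat. f (int k)) summable_on UNIV"
  proof -
    have "f summable_on range int" by (rule summable_on_subset_banach[OF sf]) auto
    then show ?thesis by (subst (asm) summable_on_reindex) (auto simp: o_def inj_def)
  qed
  have e2: "(\<lambda>j::nat. f (- int j - 1)) = (\<lambda>j. g (int m + int j + 1) * g' (- int j - 1 - int n))"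
    by (auto simp: f_def algebra_simps)
  have s2: "(\<lambda>j::nat. f (- int j - 1)) summable_on UNIV" unfolding e2 by (rule Hank(1)[OF g g'])
  have e1: "(\<lambda>k::nat. f (int k)) = (\<lambda>k. g (int m - int k) * g' (int k - int n))"
    by (auto simp: f_def)
  show "(\<lambda>k. g (int m - int k) * g' (int k - int n)) summable_on UNIV" using s1 unfolding e1 .
  have "conv g g' (int m - int n) = (\<Sum>\<^sub>\<infinity>k. g (int m - int k) * g' (int k - int n)) + hank g g' m n"
    unfolding ef[symmetric] int_split(2)[OF s1 s2] e1 e2 hank_def ..
  then show "(\<Sum>\<^sub>\<infinity>k. g (int m - int k) * g' (int k - int n)) = conv g g' (int m - int n) - hank g g' m n"
    by simp
qed

lemma toep_prod:
  assumes g: "RDS g" and h: "RDM h" and g': "RDS g'" and h': "RDM h'"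
  shows "(\<lambda>k. toep_op g h m k * toep_op g' h' k n) summable_on UNIV"
    and "(\<Sum>\<^sub>\<infinity>k. toep_op g h m k * toep_op g' h' k n) = conv g g' (int m - int n) +
          ((\<Sum>\<^sub>\<infinity>k. g (int m - int k) * h' k n) + (\<Sum>\<^sub>\<infinity>k. h m k * g' (int k - int n)) +
           (\<Sum>\<^sub>\<infinity>k. h m k * h' k n) - hank g g' m n)"
proof -
  note a = TxT(1)[OF g g', of m n] and b = TxS(1)[OF g h', of m n] and c = SxT(1)[OF h g', of m n]
    and d = SxS(1)[OF h h', of m n]
  have e: "(\<lambda>k. toep_op g h m k * toep_op g' h' k n) = (\<lambda>k. (g (int m - int k) * g' (int k - int n) + g (int m - int k) * h' k n) +
      (h m k * g' (int k - int n) + h m k * h' k n))"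
    by (auto simp: toep_op_def algebra_simps)
  have s: "(\<lambda>k. (g (int m - int k) * g' (int k - int n) + g (int m - int k) * h' k n) +
      (h m k * g' (int k - int n) + h m k * h' k n)) summable_on UNIV"
    by (intro summable_on_add a b c d)
  then show "(\<lambda>k. toep_op g h m k * toep_op g' h' k n) summable_on UNIV" unfolding e .
  show "(\<Sum>\<^sub>\<infinity>k. toep_op g h m k * toep_op g' h' k n) = conv g g' (int m - int n) +
          ((\<Sum>\<^sub>\<infinity>k. g (int m - int k) * h' k n) + (\<Sum>\<^sub>\<infinity>k. h m k * g' (int k - int n)) +
           (\<Sum>\<^sub>\<infinity>k. h m k * h' k n) - hank g g' m n)"
    unfolding e
    by (simp add: infsum_add summable_on_add a b c d TxT(2)[OF g g'])
qed

lemma RDM_add: "RDM h \<Longrightarrow> RDM h' \<Longrightarrow> RDM (\<lambda>m n. h m n + h' m n)"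
proof -
  assume h: "RDM h" and h': "RDM h'"
  show ?thesis unfolding RDM_def
  proof
    fix p
    obtain C1 where C1: "\<And>j k. norm (h j k) \<le> C1 * wr p (real j) * wr p (real k)" using RDM_E[OF h] by blast
    obtain C2 where C2: "\<And>j k. norm (h' j k) \<le> C2 * wr p (real j) * wr p (real k)" using RDM_E[OF h'] by blast
    have "norm (h j k + h' j k) \<le> (C1 + C2) * wr p (real j) * wr p (real k)" for j k
      using norm_triangle_ineq[of "h j k" "h' j k"] C1[of j k] C2[of j k] by (simp add: algebra_simps)
    then show "\<exists>C. \<forall>j k. norm (h j k + h' j k) \<le> C * wr p (real j) * wr p (real k)" by blast
  qed
qed

lemma RDM_scale: "RDM h \<Longrightarrow> RDM (\<lambda>m n. c * h m n)"
proof -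
  assume h: "RDM h"
  show ?thesis unfolding RDM_def
  proof
    fix p
    obtain C1 where C1: "\<And>j k. norm (h j k) \<le> C1 * wr p (real j) * wr p (real k)" using RDM_E[OF h] by blast
    have "norm (c * h j k) \<le> (norm c * C1) * wr p (real j) * wr p (real k)" for j k
      using mult_left_mono[OF C1[of j k], of "norm c"] by (simp add: norm_mult mult_ac)
    then show "\<exists>C. \<forall>j k. norm (c * h j k) \<le> C * wr p (real j) * wr p (real k)" by blast
  qed
qed

lemma RDM_diff: "RDM h \<Longrightarrow> RDM h' \<Longrightarrow> RDM (\<lambda>m n. h m n - h' m n)"
  using RDM_add[of h "\<lambda>m n. (-1) * h' m n"] RDM_scale[of h' "-1"] by simp

lemma RDS_add: "RDS g \<Longrightarrow> RDS g' \<Longrightarrow> RDS (\<lambda>n. g n + g' n)"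
proof -
  assume h: "RDS g" and h': "RDS g'"
  show ?thesis unfolding RDS_def
  proof
    fix p
    obtain C1 where C1: "\<And>n. norm (g n) \<le> C1 * wr p \<bar>of_int n\<bar>" using RDS_E[OF h] by blast
    obtain C2 where C2: "\<And>n. norm (g' n) \<le> C2 * wr p \<bar>of_int n\<bar>" using RDS_E[OF h'] by blast
    have "norm (g n + g' n) \<le> (C1 + C2) * wr p \<bar>of_int n\<bar>" for n
      using norm_triangle_ineq[of "g n" "g' n"] C1[of n] C2[of n] by (simp add: algebra_simps)
    then show "\<exists>C. \<forall>n. norm (g n + g' n) \<le> C * wr p \<bar>of_int n\<bar>" by blast
  qed
qed

lemma RDS_scale: "RDS g \<Longrightarrow> RDS (\<lambda>n. c * g n)"
proof -
  assume h: "RDS g"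
  show ?thesis unfolding RDS_def
  proof
    fix p
    obtain C1 where C1: "\<And>n. norm (g n) \<le> C1 * wr p \<bar>of_int n\<bar>" using RDS_E[OF h] by blast
    have "norm (c * g n) \<le> (norm c * C1) * wr p \<bar>of_int n\<bar>" for n
      using mult_left_mono[OF C1[of n], of "norm c"] by (simp add: norm_mult mult_ac)
    then show "\<exists>C. \<forall>n. norm (c * g n) \<le> C * wr p \<bar>of_int n\<bar>" by blast
  qed
qed

lemma Ainf_prod:
  assumes "A \<in> Ainf" "B \<in> Ainf"
  shows "(\<lambda>k. A m k * B k n) summable_on UNIV" and "(\<lambda>m n. \<Sum>\<^sub>\<infinity>k. A m k * B k n) \<in> Ainf"
proof -
  obtain g h where g: "RDS g" and h: "RDM h" and A: "A = toep_op g h" using assms(1) Ainf_iff by blast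
  obtain g' h' where g': "RDS g'" and h': "RDM h'" and B: "B = toep_op g' h'" using assms(2) Ainf_iff by blast
  show "(\<lambda>k. A m k * B k n) summable_on UNIV" unfolding A B by (rule toep_prod(1)[OF g h g' h'])
  define H where "H m n = (\<Sum>\<^sub>\<infinity>k. g (int m - int k) * h' k n) + (\<Sum>\<^sub>\<infinity>k. h m k * g' (int k - int n)) +
           (\<Sum>\<^sub>\<infinity>k. h m k * h' k n) - hank g g' m n" for m n
  have "RDM H" unfolding H_def
    by (intro RDM_diff RDM_add TxS(2)[OF g h'] SxT(2)[OF h g'] SxS(2)[OF h h'] Hank(2)[OF g g'])
  moreover have "(\<lambda>m n. \<Sum>\<^sub>\<infinity>k. A m k * B k n) = toep_op (conv g g') H"
  proof (intro ext)
    fix m n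
    show "(\<Sum>\<^sub>\<infinity>k. A m k * B k n) = toep_op (conv g g') H m n"
      unfolding A B toep_prod(2)[OF g h g' h'] by (simp add: toep_op_def H_def)
  qed
  ultimately show "(\<lambda>m n. \<Sum>\<^sub>\<infinity>k. A m k * B k n) \<in> Ainf" unfolding Ainf_iff using Conv(2)[OF g g'] by blast
qed

lemma Ainf_add:
  assumes "A \<in> Ainf" "B \<in> Ainf" shows "(\<lambda>m n. A m n + B m n) \<in> Ainf"
proof -
  obtain g h where g: "RDS g" and h: "RDM h" and A: "A = toep_op g h" using assms(1) Ainf_iff by blast
  obtain g' h' where g': "RDS g'" and h': "RDM h'" and B: "B = toep_op g' h'" using assms(2) Ainf_iff by blast
  have "(\<lambda>m n. A m n + B m n) = toep_op (\<lambda>n. g n + g' n) (\<lambda>m n. h m n + h' m n)"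
    by (auto simp: A B toep_op_def algebra_simps)
  then show ?thesis using RDS_add[OF g g'] RDM_add[OF h h'] Ainf_iff by blast
qed

lemma Ainf_scale:
  assumes "A \<in> Ainf" shows "(\<lambda>m n. c * A m n) \<in> Ainf"
proof -
  obtain g h where g: "RDS g" and h: "RDM h" and A: "A = toep_op g h" using assms(1) Ainf_iff by blast
  have "(\<lambda>m n. c * A m n) = toep_op (\<lambda>n. c * g n) (\<lambda>m n. c * h m n)"
    by (auto simp: A toep_op_def algebra_simps)
  then show ?thesis using RDS_scale[OF g] RDM_scale[OF h] Ainf_iff by blast
qed

lemma int_cis:
  fixes j :: int
  shows "((\<lambda>t. cis (of_int j * t)) has_integral (if j = 0 then complex_of_real (2*pi) else 0)) {0..2*pi}"
proof (cases "j = 0")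
  case True
  then show ?thesis using has_integral_const_real[of "1::complex" 0 "2*pi"] by (simp add: scaleR_conv_of_real)
next
  case False
  define E where "E z = exp (\<i> * of_int j * z) / (\<i> * of_int j)" for z :: complex
  have d: "((\<lambda>x. E (of_real x)) has_vector_derivative cis (of_int j * t)) (at t within {0..2*pi})" for t
  proof (rule has_vector_derivative_real_field)
    have "(E has_field_derivative (\<i> * of_int j) * exp (\<i> * of_int j * of_real t) / (\<i> * of_int j)) (at (of_real t))"
      unfolding E_def by (auto intro!: derivative_eq_intros)
    moreover have "(\<i> * of_int j) * exp (\<i> * of_int j * of_real t) / (\<i> * of_int j) = cis (of_int j * t)"
      using False by (simp add: cis_conv_exp mult_ac)
    ultimately show "(E has_field_derivative cis (of_int j * t)) (at (of_real t))" by simp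
  qed
  have "((\<lambda>t. cis (of_int j * t)) has_integral (E (of_real (2*pi)) - E (of_real 0))) {0..2*pi}"
    by (rule fundamental_theorem_of_calculus) (use d in auto)
  moreover have "E (of_real (2*pi)) - E (of_real 0) = 0"
  proof -
    have "exp (\<i> * of_int j * of_real (2*pi)) = cis (2 * pi * of_int j)"
      by (simp add: cis_conv_exp mult_ac)
    also have "\<dots> = 1" by (rule cis_multiple_2pi) simp
    finally show ?thesis by (simp add: E_def)
  qed
  ultimately show ?thesis using False by simp
qed

lemma RDS_summable:
  assumes g: "RDS g"
  shows "summable (\<lambda>k. norm (g (int k)) + norm (g (- int k - 1)))"
proof -
  obtain C where C: "0 \<le> C" "\<And>n. norm (g n) \<le> C * wr 2 \<bar>of_int n\<bar>" using RDS_E[OF g] by blast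
  have "norm (norm (g (int k)) + norm (g (- int k - 1))) \<le> 2 * C * wr 2 (real k)" for k
  proof -
    have a: "norm (g (int k)) \<le> C * wr 2 (real k)" using C(2)[of "int k"] by simp
    have "norm (g (- int k - 1)) \<le> C * wr 2 \<bar>of_int (- int k - 1)\<bar>" by (rule C(2))
    also have "\<dots> \<le> C * wr 2 (real k)" by (intro mult_left_mono wr_antimono C(1)) auto
    finally show ?thesis using a by simp
  qed
  note bnd = this
  have sb: "summable (\<lambda>k. 2 * C * wr 2 (real k))" by (intro summable_mult summable_wr2)
  show ?thesis by (rule summable_comparison_test'[OF sb, of 0]) (rule bnd)
qed

lemma fourier_series_split:
  assumes g: "RDS g"
  shows "(\<Sum>\<^sub>\<infinity>n. g n * cis (of_int n * \<theta>)) = (\<Sum>k. g (int k) * cis (of_int (int k) * \<theta>) + g (- int k - 1) * cis (of_int (- int k - 1) * \<theta>))"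
proof -
  have sm: "summable (\<lambda>k. norm (g (int k)) + norm (g (- int k - 1)))" by (rule RDS_summable[OF g])
  have b1: "norm (g (int k) * cis (of_int (int k) * \<theta>)) \<le> norm (g (int k)) + norm (g (- int k - 1))" for k
    by (simp add: norm_mult)
  have b2: "norm (g (- int k - 1) * cis (of_int (- int k - 1) * \<theta>)) \<le> norm (g (int k)) + norm (g (- int k - 1))" for k
    by (simp add: norm_mult)
  note n1 = nat_bound[OF b1 sm] and n2 = nat_bound[OF b2 sm]
  have "(\<Sum>\<^sub>\<infinity>n. g n * cis (of_int n * \<theta>)) = (\<Sum>k. g (int k) * cis (of_int (int k) * \<theta>)) + (\<Sum>k. g (- int k - 1) * cis (of_int (- int k - 1) * \<theta>))"
    using int_split(2)[of "\<lambda>n. g n * cis (of_int n * \<theta>)", OF n1(1) n2(1)] n1(2) n2(2) by simp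
  also have "\<dots> = (\<Sum>k. g (int k) * cis (of_int (int k) * \<theta>) + g (- int k - 1) * cis (of_int (- int k - 1) * \<theta>))"
  proof (rule suminf_add)
    show "summable (\<lambda>k. g (int k) * cis (of_int (int k) * \<theta>))"
      by (rule summable_norm_cancel, rule summable_comparison_test[OF _ sm]) (use b1 in auto)
    show "summable (\<lambda>k. g (- int k - 1) * cis (of_int (- int k - 1) * \<theta>))"
      by (rule summable_norm_cancel, rule summable_comparison_test[OF _ sm]) (use b2 in auto)
  qed
  finally show ?thesis .
qed

lemma fourier_coeff:
  fixes g :: "int \<Rightarrow> complex"
  assumes g: "RDS g"
  shows "((\<lambda>\<theta>. (\<Sum>\<^sub>\<infinity>n. g n * cis (of_int n * \<theta>)) * cis (- (of_int m * \<theta>))) has_integral (complex_of_real (2*pi) * g m)) {0..2*pi}"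
proof -
  define u where "u k \<theta> = g (int k) * cis (of_int (int k - m) * \<theta>) + g (- int k - 1) * cis (of_int (- int k - 1 - m) * \<theta>)" for k \<theta>
  define M where "M k = norm (g (int k)) + norm (g (- int k - 1))" for k
  have sM: "summable M" unfolding M_def by (rule RDS_summable[OF g])
  have uM: "norm (u k \<theta>) \<le> M k" for k \<theta>
    unfolding u_def M_def by (rule order.trans[OF norm_triangle_ineq]) (simp add: norm_mult)
  have pw: "(\<Sum>\<^sub>\<infinity>n. g n * cis (of_int n * \<theta>)) * cis (- (of_int m * \<theta>)) = (\<Sum>k. u k \<theta>)" for \<theta>
  proof -
    have sa: "summable (\<lambda>k. g (int k) * cis (of_int (int k) * \<theta>) + g (- int k - 1) * cis (of_int (- int k - 1) * \<theta>))"
    proof (rule summable_comparison_test'[OF sM, of 0])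
      fix k show "norm (g (int k) * cis (of_int (int k) * \<theta>) + g (- int k - 1) * cis (of_int (- int k - 1) * \<theta>)) \<le> M k"
        unfolding M_def by (rule order.trans[OF norm_triangle_ineq]) (simp add: norm_mult)
    qed
    have e: "(g (int k) * cis (of_int (int k) * \<theta>) + g (- int k - 1) * cis (of_int (- int k - 1) * \<theta>)) * cis (- (of_int m * \<theta>)) = u k \<theta>" for k
    proof -
      have a1: "of_int (int k) * \<theta> + - (of_int m * \<theta>) = of_int (int k - m) * \<theta>" by (simp add: algebra_simps)
      have a2: "of_int (- int k - 1) * \<theta> + - (of_int m * \<theta>) = of_int (- int k - 1 - m) * \<theta>" by (simp add: algebra_simps)
      show ?thesis unfolding u_def distrib_right mult.assoc cis_mult a1 a2 ..
    qed
    show ?thesis unfolding fourier_series_split[OF g] suminf_mult2[OF sa] e ..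
  qed
  have ul: "uniform_limit {0..2*pi} (\<lambda>N \<theta>. \<Sum>k<N. u k \<theta>) (\<lambda>\<theta>. \<Sum>k. u k \<theta>) sequentially"
    by (rule Weierstrass_m_test[OF _ sM]) (rule uM)
  have cont: "continuous_on {0..2*pi} (\<lambda>\<theta>. \<Sum>k<N. u k \<theta>)" for N
    unfolding u_def by (intro continuous_intros)
  obtain I J where I: "\<And>N. ((\<lambda>\<theta>. \<Sum>k<N. u k \<theta>) has_integral I N) {0..2*pi}"
    and J: "((\<lambda>\<theta>. \<Sum>k. u k \<theta>) has_integral J) {0..2*pi}" and IJ: "I \<longlonglongrightarrow> J"
    using uniform_limit_integral[OF ul cont] by auto
  define c where "c k = g (int k) * (if int k - m = 0 then complex_of_real (2*pi) else 0) + g (- int k - 1) * (if - int k - 1 - m = 0 then complex_of_real (2*pi) else 0)" for k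
  have Ik: "(u k has_integral c k) {0..2*pi}" for k
    unfolding u_def c_def
    by (intro has_integral_add has_integral_mult_right int_cis)
  have IN: "I N = (\<Sum>k<N. c k)" for N
  proof -
    have "((\<lambda>\<theta>. \<Sum>k<N. u k \<theta>) has_integral (\<Sum>k<N. c k)) {0..2*pi}"
      by (rule has_integral_sum) (use Ik in auto)
    then show ?thesis using I[of N] has_integral_unique by blast
  qed
  have ev: "\<forall>\<^sub>F N in sequentially. I N = complex_of_real (2*pi) * g m"
  proof -
    have "I N = complex_of_real (2*pi) * g m" if N: "N \<ge> nat \<bar>m\<bar> + 1" for N
    proof (cases "m \<ge> 0")
      case True
      have "c k = (if k = nat m then complex_of_real (2*pi) * g m else 0)" for k
        using True by (auto simp: c_def)
      then have "(\<Sum>k<N. c k) = (\<Sum>k<N. if k = nat m then complex_of_real (2*pi) * g m else 0)" by simp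
      also have "\<dots> = complex_of_real (2*pi) * g m" using N True by (subst sum.delta) auto
      finally show ?thesis by (simp add: IN)
    next
      case False
      have "c k = (if k = nat (- m - 1) then complex_of_real (2*pi) * g m else 0)" for k
        using False by (auto simp: c_def)
      then have "(\<Sum>k<N. c k) = (\<Sum>k<N. if k = nat (- m - 1) then complex_of_real (2*pi) * g m else 0)" by simp
      also have "\<dots> = complex_of_real (2*pi) * g m" using N False by (subst sum.delta) auto
      finally show ?thesis by (simp add: IN)
    qed
    then show ?thesis unfolding eventually_sequentially by blast
  qed
  have "I \<longlonglongrightarrow> complex_of_real (2*pi) * g m"
    by (rule tendsto_eventually) (use ev in \<open>simp add: eventually_mono\<close>)
  then have "J = complex_of_real (2*pi) * g m" using IJ LIMSEQ_unique by blast
  then show ?thesis using J pw by simp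
qed

lemma toep_unique:
  assumes g: "RDS g" and h: "RDM h" and g': "RDS g'" and h': "RDM h'" and eq: "toep_op g h = toep_op g' h'"
  shows "g = g'"
proof
  fix d
  obtain C where C: "0 \<le> C" "\<And>j k. norm (h j k) \<le> C * wr 1 (real j) * wr 1 (real k)" using RDM_E[OF h] by blast
  obtain C' where C': "0 \<le> C'" "\<And>j k. norm (h' j k) \<le> C' * wr 1 (real j) * wr 1 (real k)" using RDM_E[OF h'] by blast
  define z where "z = norm (g d - g' d)"
  have bd: "z * (1 + real N) \<le> C + C'" for N
  proof -
    define a where "a = N + nat d"
    define b where "b = N + nat (- d)"
    have ab: "int a - int b = d" by (simp add: a_def b_def)
    have "toep_op g h a b = toep_op g' h' a b" using eq by simp
    then have "g d - g' d = h' a b - h a b" unfolding toep_op_def ab by (simp add: algebra_simps)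
    then have "z \<le> norm (h' a b) + norm (h a b)" unfolding z_def by (simp add: norm_triangle_ineq4)
    also have "\<dots> \<le> C' * wr 1 (real a) * wr 1 (real b) + C * wr 1 (real a) * wr 1 (real b)"
      by (intro add_mono C'(2) C(2))
    also have "\<dots> \<le> C' * wr 1 (real N) * 1 + C * wr 1 (real N) * 1"
      by (intro add_mono mult_mono mult_left_mono wr_antimono wr_le1 C C')
         (auto simp: a_def b_def intro!: wr_nonneg mult_nonneg_nonneg C C')
    also have "\<dots> = (C + C') / (1 + real N)"
    proof -
      have w: "wr 1 (real N) = 1 / (1 + real N)" by (simp add: wr_def)
      show ?thesis unfolding w by (simp add: add_divide_distrib add.commute)
    qed
    finally show ?thesis by (simp add: field_simps)
  qed
  have "z = 0"
  proof (rule ccontr)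
    assume "z \<noteq> 0"
    then have zp: "z > 0" by (simp add: z_def)
    obtain N :: nat where N: "real N > (C + C') / z" using reals_Archimedean2 by blast
    have "z * real N > C + C'" using N zp by (simp add: field_simps)
    moreover have "z * (1 + real N) \<le> C + C'" by (rule bd)
    ultimately show False using zp by (simp add: algebra_simps)
  qed
  then show "g d = g' d" by (simp add: z_def)
qed

lemma symb_coeffs_toep:
  assumes g: "RDS g" and h: "RDM h"
  shows "symb_coeffs (toep_op g h) = g"
  unfolding symb_coeffs_def
proof (rule the_equality)
  show "\<exists>h'. rapid_decay_seq g \<and> rapid_decay_mat h' \<and> toep_op g h = toep_op g h'"
    using g h by (auto simp: RDS_iff RDM_iff)
  show "\<And>g'. \<exists>h'. rapid_decay_seq g' \<and> rapid_decay_mat h' \<and> toep_op g h = toep_op g' h' \<Longrightarrow> g' = g"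
    using toep_unique[OF g h] by (auto simp: RDS_iff RDM_iff)
qed

lemma sigma_toep:
  assumes g: "RDS g" and h: "RDM h"
  shows "sigma (toep_op g h) = (\<lambda>\<theta>. \<Sum>\<^sub>\<infinity>n. g n * cis (of_int n * \<theta>))"
  by (auto simp: sigma_def symb_coeffs_toep[OF g h])

lemma sigma_integral:
  assumes "A \<in> Ainf"
  shows "(sigma A has_integral (complex_of_real (2*pi) * symb_coeffs A 0)) {0..2*pi}"
proof -
  obtain g h where g: "RDS g" and h: "RDM h" and A: "A = toep_op g h" using assms Ainf_iff by blast
  show ?thesis
    using fourier_coeff[OF g, of 0] unfolding A sigma_toep[OF g h] symb_coeffs_toep[OF g h] by simp
qed

lemma sigma_eq_coeffs:
  assumes g: "RDS g" and h: "RDM h" and g': "RDS g'" and h': "RDM h'"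
    and eq: "sigma (toep_op g h) = sigma (toep_op g' h')"
  shows "g = g'"
proof
  fix m
  have e: "(\<lambda>\<theta>. \<Sum>\<^sub>\<infinity>n. g n * cis (of_int n * \<theta>)) = (\<lambda>\<theta>. \<Sum>\<^sub>\<infinity>n. g' n * cis (of_int n * \<theta>))"
    using eq unfolding sigma_toep[OF g h] sigma_toep[OF g' h'] .
  have e': "(\<Sum>\<^sub>\<infinity>n. g n * cis (of_int n * \<theta>)) = (\<Sum>\<^sub>\<infinity>n. g' n * cis (of_int n * \<theta>))" for \<theta>
    using fun_cong[OF e, of \<theta>] by simp
  have "complex_of_real (2*pi) * g m = complex_of_real (2*pi) * g' m"
    using fourier_coeff[OF g, of m, unfolded e'] fourier_coeff[OF g', of m] by (rule has_integral_unique)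
  then show "g m = g' m" by simp
qed

definition good :: "op2 \<Rightarrow> bool" where
  "good T \<longleftrightarrow> (\<forall>a b. block T a b \<in> Ainf)"

lemma infsum_nb:
  fixes f :: "nat \<times> bool \<Rightarrow> complex"
  assumes a: "(\<lambda>k. f (k, False)) summable_on UNIV" and b: "(\<lambda>k. f (k, True)) summable_on UNIV"
  shows "f summable_on UNIV" "infsum f UNIV = infsum (\<lambda>k. f (k, False)) UNIV + infsum (\<lambda>k. f (k, True)) UNIV"
proof -
  have U: "(UNIV :: (nat \<times> bool) set) = range (\<lambda>k. (k, False)) \<union> range (\<lambda>k. (k, True))"
  proof (rule UNIV_eq_I)
    fix x :: "nat \<times> bool"
    obtain k c where "x = (k, c)" by fastforce
    then show "x \<in> range (\<lambda>k. (k, False)) \<union> range (\<lambda>k. (k, True))" by (cases c) auto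
  qed
  have i1: "inj (\<lambda>k::nat. (k, False))" and i2: "inj (\<lambda>k::nat. (k, True))" by (auto simp: inj_def)
  have sA: "f summable_on range (\<lambda>k. (k, False))" using a by (subst summable_on_reindex[OF i1]) (simp add: o_def)
  have sB: "f summable_on range (\<lambda>k. (k, True))" using b by (subst summable_on_reindex[OF i2]) (simp add: o_def)
  have dj: "range (\<lambda>k::nat. (k, False)) \<inter> range (\<lambda>k. (k, True)) = {}" by auto
  show "f summable_on UNIV" unfolding U by (rule summable_on_Un_disjoint[OF sA sB dj])
  have "infsum f UNIV = infsum f (range (\<lambda>k. (k, False))) + infsum f (range (\<lambda>k. (k, True)))"
    unfolding U by (rule infsum_Un_disjoint[OF sA sB dj])
  also have "\<dots> = infsum (\<lambda>k. f (k, False)) UNIV + infsum (\<lambda>k. f (k, True)) UNIV"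
    by (simp add: infsum_reindex[OF i1] infsum_reindex[OF i2] o_def)
  finally show "infsum f UNIV = infsum (\<lambda>k. f (k, False)) UNIV + infsum (\<lambda>k. f (k, True)) UNIV" .
qed

lemma infsum_one:
  assumes "\<And>x. x \<noteq> a \<Longrightarrow> f x = 0"
  shows "infsum f UNIV = (f a :: complex)"
proof -
  have "infsum f UNIV = infsum f {a}"
    by (rule infsum_cong_neutral) (use assms in auto)
  then show ?thesis by simp
qed

lemma block_opmul:
  assumes "good S" "good T"
  shows "block (opmul S T) a b = (\<lambda>m n. (\<Sum>\<^sub>\<infinity>k. block S a False m k * block T False b k n) + (\<Sum>\<^sub>\<infinity>k. block S a True m k * block T True b k n))"
proof (intro ext)
  fix m n
  have s: "(\<lambda>k. block S a c m k * block T c b k n) summable_on UNIV" for c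
    using Ainf_prod(1) assms unfolding good_def by blast
  show "block (opmul S T) a b m n = (\<Sum>\<^sub>\<infinity>k. block S a False m k * block T False b k n) + (\<Sum>\<^sub>\<infinity>k. block S a True m k * block T True b k n)"
    unfolding block_def opmul_def
    by (rule infsum_nb(2)[of "\<lambda>kc. S (m, a) kc * T kc (n, b)"]) (use s in \<open>simp_all add: block_def\<close>)
qed

lemma good_mult: "good S \<Longrightarrow> good T \<Longrightarrow> good (opmul S T)"
proof -
  assume S: "good S" and T: "good T"
  show "good (opmul S T)" unfolding good_def
  proof (intro allI)
    fix a b
    have "(\<lambda>m n. \<Sum>\<^sub>\<infinity>k. block S a c m k * block T c b k n) \<in> Ainf" for c
      using Ainf_prod(2) S T unfolding good_def by blast
    then show "block (opmul S T) a b \<in> Ainf"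
      unfolding block_opmul[OF S T] by (intro Ainf_add)
  qed
qed

lemma good_add: "good S \<Longrightarrow> good T \<Longrightarrow> good (\<lambda>i j. S i j + T i j)"
  unfolding good_def block_def using Ainf_add by blast

lemma good_smult: "good T \<Longrightarrow> good (\<lambda>i j. c * T i j)"
  unfolding good_def block_def using Ainf_scale by blast

lemma zero_Ainf: "(\<lambda>m n. 0) \<in> Ainf"
proof -
  have "RDS (\<lambda>_. 0)" by (auto simp: RDS_def intro: exI[of _ 0])
  moreover have "RDM (\<lambda>_ _. 0)" by (auto simp: RDM_def intro: exI[of _ 0])
  moreover have "(\<lambda>m n. 0) = toep_op (\<lambda>_. 0) (\<lambda>_ _. 0)" by (simp add: toep_op_def)
  ultimately show ?thesis unfolding Ainf_iff by blast
qed

lemma block_diag: "block (diag_op x y) a b = (if a = b then (if a then y else x) else (\<lambda>m n. 0))"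
  by (auto simp: block_def diag_op_def)

lemma good_diag: "x \<in> Ainf \<Longrightarrow> y \<in> Ainf \<Longrightarrow> good (diag_op x y)"
  unfolding good_def block_diag using zero_Ainf by auto

lemma Dp_left: "opmul Dp X (m, a) (n, b) = of_nat (Suc m) * X (m, \<not> a) (n, b)"
  unfolding opmul_def by (subst infsum_one[where a = "(m, \<not> a)"]) (auto simp: Dp_def split: if_splits)

lemma Dp_right: "opmul X Dp (m, a) (n, b) = X (m, a) (n, \<not> b) * of_nat (Suc n)"
  unfolding opmul_def by (subst infsum_one[where a = "(n, \<not> b)"]) (auto simp: Dp_def split: if_splits)

lemma absDp_left: "opmul absDp X (m, a) (n, b) = of_nat (Suc m) * X (m, a) (n, b)"
  unfolding opmul_def by (subst infsum_one[where a = "(m, a)"]) (auto simp: absDp_def split: if_splits)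

lemma absDp_right: "opmul X absDp (m, a) (n, b) = X (m, a) (n, b) * of_nat (Suc n)"
  unfolding opmul_def by (subst infsum_one[where a = "(n, b)"]) (auto simp: absDp_def split: if_splits)

lemma delta_diag: "delta T i i = 0"
  by (cases i) (simp add: delta_def opcomm_def absDp_left absDp_right)

lemma comm_diag_zero: "opcomm Dp (diag_op x y) i i = 0"
  by (cases i) (simp add: opcomm_def Dp_left Dp_right diag_op_def)

lemma wr_Suc: "0 \<le> x \<Longrightarrow> (1 + x) * wr (Suc p) x = wr p x"
proof -
  assume x: "0 \<le> x"
  have "wr (Suc p) x = wr p x / (1 + x)" by (simp add: wr_def)
  moreover have "(1 + x) \<noteq> 0" using x by auto
  ultimately show ?thesis by simp
qed

lemma RDS_mult_id: "RDS g \<Longrightarrow> RDS (\<lambda>d. of_int d * g d)"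
proof -
  assume g: "RDS g"
  show ?thesis unfolding RDS_def
  proof
    fix p
    obtain C where C: "0 \<le> C" "\<And>n. norm (g n) \<le> C * wr (Suc p) \<bar>of_int n\<bar>" using RDS_E[OF g] by blast
    have "norm (of_int d * g d) \<le> C * wr p \<bar>of_int d\<bar>" for d
    proof -
      have "norm (of_int d * g d) = \<bar>of_int d\<bar> * norm (g d)" by (simp add: norm_mult)
      also have "\<dots> \<le> (1 + \<bar>of_int d\<bar>) * (C * wr (Suc p) \<bar>of_int d\<bar>)"
        by (intro mult_mono C(2)) auto
      also have "\<dots> = C * wr p \<bar>of_int d\<bar>" using wr_Suc[of "\<bar>of_int d\<bar>" p] by (simp add: mult_ac)
      finally show ?thesis .
    qed
    then show "\<exists>C. \<forall>n. norm (of_int n * g n) \<le> C * wr p \<bar>of_int n\<bar>" by blast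
  qed
qed

lemma RDM_mult_row: "RDM h \<Longrightarrow> RDM (\<lambda>m n. of_nat (Suc m) * h m n)"
proof -
  assume h: "RDM h"
  show ?thesis unfolding RDM_def
  proof
    fix p
    obtain C where C: "0 \<le> C" "\<And>j k. norm (h j k) \<le> C * wr (Suc p) (real j) * wr (Suc p) (real k)" using RDM_E[OF h] by blast
    have "norm (of_nat (Suc m) * h m n) \<le> C * wr p (real m) * wr p (real n)" for m n
    proof -
      have "norm (of_nat (Suc m) * h m n :: complex) = (1 + real m) * norm (h m n)" by (simp only: norm_mult norm_of_nat) simp
      also have "\<dots> \<le> (1 + real m) * (C * wr (Suc p) (real m) * wr (Suc p) (real n))"
        by (intro mult_left_mono C(2)) auto
      also have "\<dots> = C * ((1 + real m) * wr (Suc p) (real m)) * wr (Suc p) (real n)" by (simp add: mult_ac)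
      also have "\<dots> = C * wr p (real m) * wr (Suc p) (real n)" by (simp add: wr_Suc)
      also have "\<dots> \<le> C * wr p (real m) * wr p (real n)"
        by (intro mult_left_mono wr_le_p mult_nonneg_nonneg C wr_nonneg) auto
      finally show ?thesis .
    qed
    then show "\<exists>C. \<forall>m n. norm (of_nat (Suc m) * h m n) \<le> C * wr p (real m) * wr p (real n)" by blast
  qed
qed

lemma RDM_mult_col: "RDM h \<Longrightarrow> RDM (\<lambda>m n. h m n * of_nat (Suc n))"
proof -
  assume h: "RDM h"
  show ?thesis unfolding RDM_def
  proof
    fix p
    obtain C where C: "0 \<le> C" "\<And>j k. norm (h j k) \<le> C * wr (Suc p) (real j) * wr (Suc p) (real k)" using RDM_E[OF h] by blast
    have "norm (h m n * of_nat (Suc n)) \<le> C * wr p (real m) * wr p (real n)" for m n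
    proof -
      have "norm (h m n * of_nat (Suc n) :: complex) = norm (h m n) * (1 + real n)" by (simp only: norm_mult norm_of_nat) simp
      also have "\<dots> \<le> (C * wr (Suc p) (real m) * wr (Suc p) (real n)) * (1 + real n)"
        by (intro mult_right_mono C(2)) auto
      also have "\<dots> = C * wr (Suc p) (real m) * ((1 + real n) * wr (Suc p) (real n))" by (simp add: mult_ac)
      also have "\<dots> = C * wr (Suc p) (real m) * wr p (real n)" by (simp add: wr_Suc)
      also have "\<dots> \<le> C * wr p (real m) * wr p (real n)"
        by (intro mult_right_mono mult_left_mono wr_le_p mult_nonneg_nonneg C wr_nonneg) auto
      finally show ?thesis .
    qed
    then show "\<exists>C. \<forall>m n. norm (h m n * of_nat (Suc n)) \<le> C * wr p (real m) * wr p (real n)" by blast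
  qed
qed

lemma comm_block_Ainf:
  assumes g: "RDS g" and h: "RDM h" and h': "RDM h'"
  shows "(\<lambda>m n. of_nat (Suc m) * toep_op g h' m n - toep_op g h m n * of_nat (Suc n)) \<in> Ainf"
proof -
  have "(\<lambda>m n. of_nat (Suc m) * toep_op g h' m n - toep_op g h m n * of_nat (Suc n)) =
        toep_op (\<lambda>d. of_int d * g d) (\<lambda>m n. of_nat (Suc m) * h' m n - h m n * of_nat (Suc n))"
    by (auto simp: toep_op_def algebra_simps)
  moreover have "RDM (\<lambda>m n. of_nat (Suc m) * h' m n - h m n * of_nat (Suc n))"
    by (intro RDM_diff RDM_mult_row RDM_mult_col h h')
  ultimately show ?thesis unfolding Ainf_iff using RDS_mult_id[OF g] by blast
qed

lemma good_CS2q: "X \<in> CS2q \<Longrightarrow> good X"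
  unfolding CS2q_def using good_diag by blast

lemma good_comm:
  assumes "X \<in> CS2q"
  shows "good (opcomm Dp X)"
proof -
  obtain x y where x: "x \<in> Ainf" and y: "y \<in> Ainf" and sxy: "sigma x = sigma y" and X: "X = diag_op x y"
    using assms unfolding CS2q_def by blast
  obtain g h where g: "RDS g" and h: "RDM h" and xe: "x = toep_op g h" using x Ainf_iff by blast
  obtain g' h' where g': "RDS g'" and h': "RDM h'" and ye: "y = toep_op g' h'" using y Ainf_iff by blast
  have gg: "g' = g" using sigma_eq_coeffs[OF g h g' h'] sxy xe ye by simp
  have blk: "block (opcomm Dp X) a b = (if a = b then (\<lambda>m n. 0) else if a then
          (\<lambda>m n. of_nat (Suc m) * x m n - y m n * of_nat (Suc n)) else
          (\<lambda>m n. of_nat (Suc m) * y m n - x m n * of_nat (Suc n)))" for a b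
    by (auto simp: block_def opcomm_def Dp_left Dp_right X diag_op_def)
  show ?thesis unfolding good_def
  proof (intro allI)
    fix a b
    show "block (opcomm Dp X) a b \<in> Ainf"
      unfolding blk xe ye gg using zero_Ainf comm_block_Ainf[OF g h h'] comm_block_Ainf[OF g h' h] by auto
  qed
qed

lemma good_opcomm: "good S \<Longrightarrow> good T \<Longrightarrow> good (opcomm S T)"
proof -
  assume S: "good S" and T: "good T"
  have e: "opcomm S T = (\<lambda>i j. opmul S T i j + (-1) * opmul T S i j)" by (auto simp: opcomm_def)
  show ?thesis unfolding e by (rule good_add[OF good_mult[OF S T] good_smult[OF good_mult[OF T S]]])
qed

lemma Balg_good: "T \<in> Balg \<Longrightarrow> good T"
  unfolding Balg_def
proof (induction rule: alg_gen.induct)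
  case (gen T)
  then show ?case using good_CS2q good_comm by blast
next
  case (add S T)
  then show ?case using good_add by blast
next
  case (smult T c)
  then show ?case using good_smult by blast
next
  case (mult S T)
  then show ?case using good_mult by blast
qed

lemma wr_powr: "wr p (real k) = real (Suc k) powr (- real p)"
  by (simp add: wr_def powr_minus powr_realpow add.commute divide_inverse)

lemma dirichlet_rd:
  fixes d :: "nat \<Rightarrow> complex"
  assumes d: "\<And>p. \<exists>C. \<forall>k. norm (d k) \<le> C * wr p (real k)"
  shows "(\<lambda>s. \<Sum>k. d k * of_nat (Suc k) powr (-s)) holomorphic_on UNIV"
    and "\<And>s. summable (\<lambda>k. d k * of_nat (Suc k) powr (-s))"
proof -
  have bd: "\<exists>e b. 0 < e \<and> summable b \<and> (\<forall>\<^sub>F k in sequentially. \<forall>y\<in>ball x e \<inter> UNIV. norm (d k * of_nat (Suc k) powr (-y)) \<le> b k)" for x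
  proof -
    define p where "p = nat \<lceil>1 - Re x\<rceil> + 2"
    obtain C where C: "\<And>k. norm (d k) \<le> C * wr p (real k)" using d by blast
    have "norm (d k * of_nat (Suc k) powr (-y)) \<le> C * wr 2 (real k)" if y: "y \<in> ball x 1" for y k
    proof -
      have yx: "norm (x - y) < 1" using y by (simp add: dist_norm)
      have rey: "Re y \<ge> Re x - 1" using yx complex_Re_le_cmod[of "x - y"] by simp
      have pp: "- Re y \<le> real p - 2" unfolding p_def using rey by linarith
      have C0: "0 \<le> C" using C[of 0] by (metis const_nonneg wr_pos of_nat_0_le_iff)
      have "norm (d k * of_nat (Suc k) powr (-y)) = norm (d k) * real (Suc k) powr (- Re y)"
        by (simp only: norm_mult norm_Suc_powr) simp
      also have "\<dots> \<le> (C * wr p (real k)) * real (Suc k) powr (real p - 2)"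
        by (intro mult_mono C powr_mono pp) (use C0 in \<open>auto intro!: mult_nonneg_nonneg wr_nonneg\<close>)
      also have "\<dots> = C * (real (Suc k) powr (- real p) * real (Suc k) powr (real p - 2))"
        by (simp add: wr_powr)
      also have "\<dots> = C * wr 2 (real k)"
        by (simp add: powr_add[symmetric] wr_powr)
      finally show ?thesis .
    qed
    moreover have "summable (\<lambda>k. C * wr 2 (real k))" by (intro summable_mult summable_wr2)
    ultimately show ?thesis by (intro exI[of _ 1] exI[of _ "\<lambda>k. C * wr 2 (real k)"]) auto
  qed
  have hol: "(\<lambda>s. d k * of_nat (Suc k) powr (-s)) holomorphic_on UNIV" for k
    by (intro holomorphic_intros)
  show "(\<lambda>s. \<Sum>k. d k * of_nat (Suc k) powr (-s)) holomorphic_on UNIV"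
    by (rule holo_series(1)[OF open_UNIV hol bd])
  show "\<And>s. summable (\<lambda>k. d k * of_nat (Suc k) powr (-s))"
    by (rule holo_series(2)[OF open_UNIV hol bd]) auto
qed

lemma RDM_diag: "RDM h \<Longrightarrow> \<exists>C. \<forall>k. norm (h k k) \<le> C * wr p (real k)"
proof -
  assume h: "RDM h"
  obtain C where C: "0 \<le> C" "\<And>j k. norm (h j k) \<le> C * wr p (real j) * wr p (real k)" using RDM_E[OF h] by blast
  have "norm (h k k) \<le> C * wr p (real k)" for k
  proof -
    have "norm (h k k) \<le> C * wr p (real k) * wr p (real k)" by (rule C(2))
    also have "\<dots> \<le> C * wr p (real k) * 1" by (intro mult_left_mono wr_le1 mult_nonneg_nonneg C wr_nonneg) auto
    finally show ?thesis by simp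
  qed
  then show ?thesis by blast
qed

lemma good_zeta:
  assumes A1: "block T False False \<in> Ainf" and A2: "block T True True \<in> Ainf"
  shows "\<exists>H. H holomorphic_on UNIV \<and> (\<forall>s. 1 < Re s \<longrightarrow>
     zeta_op T s = (symb_coeffs (block T False False) 0 + symb_coeffs (block T True True) 0) * zs s + H s)"
proof -
  obtain g1 h1 where g1: "RDS g1" and h1: "RDM h1" and B1: "block T False False = toep_op g1 h1" using A1 Ainf_iff by blast
  obtain g2 h2 where g2: "RDS g2" and h2: "RDM h2" and B2: "block T True True = toep_op g2 h2" using A2 Ainf_iff by blast
  define c where "c = g1 0 + g2 0"
  define d where "d k = h1 k k + h2 k k" for k
  have dd: "\<exists>C. \<forall>k. norm (d k) \<le> C * wr p (real k)" for p
  proof -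
    obtain C1 where C1: "\<And>k. norm (h1 k k) \<le> C1 * wr p (real k)" using RDM_diag[OF h1] by blast
    obtain C2 where C2: "\<And>k. norm (h2 k k) \<le> C2 * wr p (real k)" using RDM_diag[OF h2] by blast
    have "norm (d k) \<le> (C1 + C2) * wr p (real k)" for k
      unfolding d_def using norm_triangle_ineq[of "h1 k k" "h2 k k"] C1[of k] C2[of k] by (simp add: algebra_simps)
    then show ?thesis by blast
  qed
  define H where "H s = (\<Sum>k. d k * of_nat (Suc k) powr (-s))" for s
  have Hh: "H holomorphic_on UNIV" unfolding H_def by (rule dirichlet_rd(1)[OF dd])
  have Hs: "summable (\<lambda>k. d k * of_nat (Suc k) powr (-s))" for s by (rule dirichlet_rd(2)[OF dd])
  have T1: "T (k, False) (k, False) = g1 0 + h1 k k" for k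
    using fun_cong[OF fun_cong[OF B1, of k], of k] by (simp add: block_def toep_op_def)
  have T2: "T (k, True) (k, True) = g2 0 + h2 k k" for k
    using fun_cong[OF fun_cong[OF B2, of k], of k] by (simp add: block_def toep_op_def)
  have main: "zeta_op T s = c * zs s + H s" if s: "1 < Re s" for s
  proof -
    have zsm: "summable (\<lambda>k. norm (of_nat (Suc k) powr (-s) :: complex))" by (rule zs_summable[OF s])
    have zs': "summable (\<lambda>k. of_nat (Suc k) powr (-s) :: complex)" by (rule summable_norm_cancel[OF zsm])
    define f where "f = (\<lambda>(k, a). T (k, a) (k, a) * of_nat (Suc k) powr (-s))"
    have fF: "(\<lambda>k. f (k, False)) = (\<lambda>k. (g1 0 + h1 k k) * of_nat (Suc k) powr (-s))" by (auto simp: f_def T1)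
    have fT: "(\<lambda>k. f (k, True)) = (\<lambda>k. (g2 0 + h2 k k) * of_nat (Suc k) powr (-s))" by (auto simp: f_def T2)
    have sb: "summable (\<lambda>k. norm ((g + h k k) * of_nat (Suc k) powr (-s) :: complex))" if h: "RDM h" for g h
    proof -
      obtain C where C: "\<And>k. norm (h k k) \<le> C * wr 0 (real k)" using RDM_diag[OF h] by blast
      have "norm ((g + h k k) * of_nat (Suc k) powr (-s)) \<le> (norm g + C) * norm (of_nat (Suc k) powr (-s) :: complex)" for k
        unfolding norm_mult
        by (intro mult_right_mono order.trans[OF norm_triangle_ineq]) (use C[of k] in \<open>auto simp: wr_def\<close>)
      then show ?thesis
        by (intro summable_comparison_test'[OF summable_mult[OF zsm], of 0]) auto
    qed
    have n1: "(\<lambda>k. f (k, False)) summable_on UNIV" "infsum (\<lambda>k. f (k, False)) UNIV = suminf (\<lambda>k. f (k, False))"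
      unfolding fF using nat_bound[OF order.refl sb[OF h1]] by auto
    have n2: "(\<lambda>k. f (k, True)) summable_on UNIV" "infsum (\<lambda>k. f (k, True)) UNIV = suminf (\<lambda>k. f (k, True))"
      unfolding fT using nat_bound[OF order.refl sb[OF h2]] by auto
    have "zeta_op T s = infsum f UNIV" unfolding zeta_op_def f_def ..
    also have "\<dots> = suminf (\<lambda>k. f (k, False)) + suminf (\<lambda>k. f (k, True))"
      using infsum_nb(2)[OF n1(1) n2(1)] n1(2) n2(2) by simp
    also have "\<dots> = (\<Sum>k. f (k, False) + f (k, True))"
      by (rule suminf_add) (use sb[OF h1] sb[OF h2] fF fT in \<open>auto intro: summable_norm_cancel\<close>)
    also have "\<dots> = (\<Sum>k. c * of_nat (Suc k) powr (-s) + d k * of_nat (Suc k) powr (-s))"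
      by (rule suminf_cong) (simp add: f_def T1 T2 c_def d_def algebra_simps)
    also have "\<dots> = c * zs s + H s"
    proof -
      have a: "(\<lambda>k. c * of_nat (Suc k) powr (-s)) sums (c * zs s)"
        unfolding zs_def by (rule sums_mult[OF summable_sums[OF zs']])
      have b: "(\<lambda>k. d k * of_nat (Suc k) powr (-s)) sums H s"
        unfolding H_def by (rule summable_sums[OF Hs])
      show ?thesis by (rule sums_unique[symmetric], rule sums_add[OF a b])
    qed
    finally show ?thesis .
  qed
  have "c = symb_coeffs (block T False False) 0 + symb_coeffs (block T True True) 0"
    unfolding B1 B2 symb_coeffs_toep[OF g1 h1] symb_coeffs_toep[OF g2 h2] c_def ..
  then show ?thesis using Hh main by blast
qed

lemma mero_F:
  assumes H: "H holomorphic_on UNIV"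
  shows "(\<lambda>s. c * Zf s / (s - 1) + H s) meromorphic_on UNIV"
    and "\<And>s. 1 < Re s \<Longrightarrow> (\<lambda>s. c * Zf s / (s - 1) + H s) s = c * zs s + H s"
    and "\<And>z. z \<noteq> 1 \<Longrightarrow> (\<lambda>s. c * Zf s / (s - 1) + H s) analytic_on {z}"
    and "residue (\<lambda>s. c * Zf s / (s - 1) + H s) 1 = c"
proof -
  have aZ: "Zf analytic_on UNIV" using Zf_holo by (simp add: analytic_on_open)
  have aH: "H analytic_on UNIV" using H by (simp add: analytic_on_open)
  show "(\<lambda>s. c * Zf s / (s - 1) + H s) meromorphic_on UNIV"
    by (intro meromorphic_intros analytic_on_imp_meromorphic_on aZ aH)
  show "(\<lambda>s. c * Zf s / (s - 1) + H s) s = c * zs s + H s" if s: "1 < Re s" for s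
  proof -
    have "s \<noteq> 1" using s by auto
    then show ?thesis using Zf_eq[OF s] by simp
  qed
  have hol: "(\<lambda>s. c * Zf s / (s - 1) + H s) holomorphic_on (UNIV - {1})"
    by (intro holomorphic_intros holomorphic_on_subset[OF Zf_holo] holomorphic_on_subset[OF H]) auto
  then have "(\<lambda>s. c * Zf s / (s - 1) + H s) analytic_on (UNIV - {1})"
    by (simp add: analytic_on_open open_Diff)
  then show "\<And>z. z \<noteq> 1 \<Longrightarrow> (\<lambda>s. c * Zf s / (s - 1) + H s) analytic_on {z}"
    by (meson analytic_on_subset Diff_iff UNIV_I empty_subsetI insert_subset singletonD)
  have h1: "(\<lambda>s. c * Zf s / (s - 1)) holomorphic_on (UNIV - {1})"
    by (intro holomorphic_intros holomorphic_on_subset[OF Zf_holo]) auto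
  have h2: "H holomorphic_on (UNIV - {1})" by (rule holomorphic_on_subset[OF H]) auto
  have "residue (\<lambda>s. c * Zf s / (s - 1) + H s) 1 = residue (\<lambda>s. c * Zf s / (s - 1)) 1 + residue H 1"
    by (rule residue_add[OF open_UNIV _ h1 h2]) simp
  also have "residue (\<lambda>s. c * Zf s / (s - 1)) 1 = c * Zf 1"
    by (rule residue_simple[OF open_UNIV, of 1 "\<lambda>s. c * Zf s"]) (auto intro!: holomorphic_intros Zf_holo)
  also have "residue H 1 = 0" by (rule residue_holo[OF open_UNIV _ H]) simp
  finally show "residue (\<lambda>s. c * Zf s / (s - 1) + H s) 1 = c" by (simp add: Zf_1)
qed

lemma mero_zero:
  assumes "\<And>i. T i i = 0"
  shows "mero_ext_poles_in T (\<lambda>_. 0) S"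
proof -
  have "zeta_op T s = 0" for s
    unfolding zeta_op_def by (simp add: assms split_def)
  then show ?thesis unfolding mero_ext_poles_in_def by auto
qed

definition I1 :: op1 where "I1 = toep_op (\<lambda>n. if n = 0 then 1 else 0) (\<lambda>_ _. 0)"

lemma I1_RDS: "RDS (\<lambda>n::int. if n = 0 then 1 else (0::complex))"
  unfolding RDS_def by (intro allI exI[of _ 1]) (auto simp: wr_def intro: wr_nonneg)

lemma I1_RDM: "RDM (\<lambda>_ _. 0)"
  unfolding RDM_def by (auto intro: exI[of _ 0])

lemma I1_Ainf: "I1 \<in> Ainf"
  unfolding I1_def Ainf_iff using I1_RDS I1_RDM by blast

lemma I1_symb: "symb_coeffs I1 0 = 1"
  unfolding I1_def symb_coeffs_toep[OF I1_RDS I1_RDM] by simp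

lemma Id_CS2q: "diag_op I1 I1 \<in> CS2q"
  unfolding CS2q_def using I1_Ainf by blast

lemma good_mero:
  assumes "block T False False \<in> Ainf" "block T True True \<in> Ainf"
  shows "\<exists>F. mero_ext_poles_in T F {1} \<and> residue F 1 = symb_coeffs (block T False False) 0 + symb_coeffs (block T True True) 0"
proof -
  obtain H where H: "H holomorphic_on UNIV" and z: "\<And>s. 1 < Re s \<Longrightarrow>
     zeta_op T s = (symb_coeffs (block T False False) 0 + symb_coeffs (block T True True) 0) * zs s + H s"
    using good_zeta[OF assms] by blast
  define c where "c = symb_coeffs (block T False False) 0 + symb_coeffs (block T True True) 0"
  note M = mero_F[OF H, where c=c]
  have "mero_ext_poles_in T (\<lambda>s. c * Zf s / (s - 1) + H s) {1}"
    unfolding mero_ext_poles_in_def using M z by (auto simp: c_def)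
  then show ?thesis using M(4) c_def by blast
qed

lemma DSops_cases:
  assumes "T \<in> DSops"
  shows "\<exists>F. mero_ext_poles_in T F {1}"
proof -
  obtain j G where G: "G \<in> CS2q \<union> opcomm Dp ` CS2q" and T: "T = (delta ^^ j) G"
    using assms unfolding DSops_def by blast
  show ?thesis
  proof (cases j)
    case 0
    show ?thesis
    proof (cases "G \<in> CS2q")
      case True
      then have "good G" by (rule good_CS2q)
      then show ?thesis using good_mero[of G] T 0 unfolding good_def by auto
    next
      case False
      then obtain X where X: "X \<in> CS2q" and GX: "G = opcomm Dp X" using G by blast
      obtain x y where "X = diag_op x y" using X unfolding CS2q_def by blast
      then have "\<And>i. G i i = 0" using GX comm_diag_zero by simp
      then have "mero_ext_poles_in G (\<lambda>_. 0) {1}" by (rule mero_zero)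
      then show ?thesis using T 0 by auto
    qed
  next
    case (Suc i)
    then have "T = delta ((delta ^^ i) G)" using T by simp
    then have "\<And>k. T k k = 0" using delta_diag by simp
    then show ?thesis using mero_zero by blast
  qed
qed

lemma minimal:
  assumes adm: "dim_spec_admissible S'"
  shows "1 \<in> S'"
proof (rule ccontr)
  assume n1: "1 \<notin> S'"
  define Id where "Id = diag_op I1 I1"
  have "Id \<in> DSops" unfolding DSops_def Id_def
    by (rule UN_I[of 0]) (use Id_CS2q in auto)
  then obtain F where F: "mero_ext_poles_in Id F S'" using adm unfolding dim_spec_admissible_def by blast
  have cF: "isCont F 1" using F n1 unfolding mero_ext_poles_in_def by (auto intro: analytic_at_imp_isCont)
  have gI: "good Id" unfolding Id_def by (rule good_diag[OF I1_Ainf I1_Ainf])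
  have bI: "block Id False False = I1" "block Id True True = I1" by (simp_all add: Id_def block_diag)
  have ex: "\<exists>H. H holomorphic_on UNIV \<and> (\<forall>s. 1 < Re s \<longrightarrow> zeta_op Id s = (symb_coeffs (block Id False False) 0 + symb_coeffs (block Id True True) 0) * zs s + H s)"
    by (rule good_zeta) (simp_all add: bI I1_Ainf)
  obtain H where H: "H holomorphic_on UNIV" and z: "\<And>s. 1 < Re s \<Longrightarrow> zeta_op Id s = 2 * zs s + H s"
    using ex unfolding bI I1_symb by auto
  define sq where "sq n = 1 + complex_of_real (inverse (real (Suc n)))" for n
  have sqlim: "sq \<longlonglongrightarrow> 1"
  proof -
    have "(\<lambda>n. complex_of_real (inverse (real (Suc n)))) \<longlonglongrightarrow> complex_of_real 0"
      by (rule tendsto_of_real[OF LIMSEQ_inverse_real_of_nat])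
    then show ?thesis unfolding sq_def using tendsto_add[OF tendsto_const, of _ 0 _ 1] by simp
  qed
  have sqre: "1 < Re (sq n)" for n by (simp add: sq_def)
  have L1: "(\<lambda>n. F (sq n) * (sq n - 1)) \<longlonglongrightarrow> F 1 * (1 - 1)"
    by (intro tendsto_intros isCont_tendsto_compose[OF cF sqlim] sqlim)
  have eq: "F (sq n) * (sq n - 1) = 2 * Zf (sq n) + H (sq n) * (sq n - 1)" for n
  proof -
    have "F (sq n) = 2 * zs (sq n) + H (sq n)" using F z[OF sqre[of n]] sqre[of n] unfolding mero_ext_poles_in_def by auto
    then show ?thesis by (simp add: Zf_eq[OF sqre[of n]] algebra_simps)
  qed
  have cont1: "isCont f 1" if "f holomorphic_on UNIV" for f
  proof -
    have "f analytic_on UNIV" using that by (simp add: analytic_on_open)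
    then have "f analytic_on {1}" by (rule analytic_on_subset) simp
    then show ?thesis by (rule analytic_at_imp_isCont)
  qed
  have cZ: "isCont Zf 1" by (rule cont1[OF Zf_holo])
  have cH: "isCont H 1" by (rule cont1[OF H])
  have L2: "(\<lambda>n. 2 * Zf (sq n) + H (sq n) * (sq n - 1)) \<longlonglongrightarrow> 2 * Zf 1 + H 1 * (1 - 1)"
    by (intro tendsto_intros isCont_tendsto_compose[OF cZ sqlim] isCont_tendsto_compose[OF cH sqlim] sqlim)
  have "F 1 * (1 - 1) = 2 * Zf 1 + H 1 * (1 - 1)"
    using L1 L2 unfolding eq by (rule LIMSEQ_unique)
  then show False by (simp add: Zf_1)
qed

theorem mainTheorem5:
  shows "is_dimension_spectrum {1} \<and>
    (\<forall>T\<in>Balg. \<exists>F. F meromorphic_on UNIV \<and> (\<forall>s. 1 < Re s \<longrightarrow> F s = zeta_op T s) \<and>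
       residue F 1 = complex_of_real (1 / (2 * pi)) * integral {0..2 * pi} (tr_symb T))"
proof
  show "is_dimension_spectrum {1}"
    unfolding is_dimension_spectrum_def dim_spec_admissible_def
    using DSops_cases minimal by (auto simp: dim_spec_admissible_def)
  show "\<forall>T\<in>Balg. \<exists>F. F meromorphic_on UNIV \<and> (\<forall>s. 1 < Re s \<longrightarrow> F s = zeta_op T s) \<and>
       residue F 1 = complex_of_real (1 / (2 * pi)) * integral {0..2 * pi} (tr_symb T)"
  proof
    fix T assume T: "T \<in> Balg"
    then have g: "good T" by (rule Balg_good)
    then have b1: "block T False False \<in> Ainf" and b2: "block T True True \<in> Ainf" unfolding good_def by auto
    obtain F where F: "mero_ext_poles_in T F {1}"
      and r: "residue F 1 = symb_coeffs (block T False False) 0 + symb_coeffs (block T True True) 0"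
      using good_mero[OF b1 b2] by blast
    have "(tr_symb T has_integral (complex_of_real (2*pi) * symb_coeffs (block T False False) 0 +
            complex_of_real (2*pi) * symb_coeffs (block T True True) 0)) {0..2*pi}"
      unfolding tr_symb_def[abs_def] by (intro has_integral_add sigma_integral b1 b2)
    then have "integral {0..2*pi} (tr_symb T) = complex_of_real (2*pi) * (symb_coeffs (block T False False) 0 + symb_coeffs (block T True True) 0)"
      by (simp add: integral_unique algebra_simps)
    then have "residue F 1 = complex_of_real (1 / (2 * pi)) * integral {0..2 * pi} (tr_symb T)"
      unfolding r by (simp add: field_simps)
    then show "\<exists>F. F meromorphic_on UNIV \<and> (\<forall>s. 1 < Re s \<longrightarrow> F s = zeta_op T s) \<and>
       residue F 1 = complex_of_real (1 / (2 * pi)) * integral {0..2 * pi} (tr_symb T)"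
      using F unfolding mero_ext_poles_in_def by blast
  qed
qed

end
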